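(* Let $|\phi_{\mathrm w}(\theta)\rangle$ be the 2-d Ising whip state on $\Lambda_L$, let $\mathcal B'=\{(L-1,b):0\le b\le L-2\}\cup\{(a,L-1):0\le a\le L-2\}$ (so $|\mathcal B'|=2L-2$) and $\partial X=\sum_{i\in\mathcal B'}X_i$. Then for every $\theta$ with $\cos\theta\neq0$, $$\lim_{L\to\infty}\frac{\langle\partial X\rangle_\theta}{2L-2}=\frac{\cos2\theta+|\cos2\theta|}{2\cos\theta},$$ and the limit is $0$ when $\cos\theta=0$. In particular the limit vanishes exactly on $[\pi/4,3\pi/4]\cup[-3\pi/4,-\pi/4]$ (mod $2\pi$) and is nonzero elsewhere.
   Context: 2-d Ising whip circuit: for $L\ge2$, $\Lambda_L=\{0,\dots,L-1\}^2$, one qubit per site, $N=L^2$. Directed edges $(a,b)\to(a+1,b)$ and $(a,b)\to(a,b+1)$ whenever the target lies in $\Lambda_L$. $\deg^-(v)$ is the number of incoming edges of $v$. For each edge $u\to v$ let $G_{u\to v}(\theta)=\exp(-\mathrm i\,\theta\,Z_uY_v/\deg^-(v))$ with Pauli matrices $X,Y,Z$. The whip state is $|\phi_{\mathrm w}(\theta)\rangle=\prod G_{u\to v}(\theta)|+\rangle^{\otimes N}$, $|+\rangle=(|0\rangle+|1\rangle)/\sqrt2$, with gates applied in order of increasing $a+b$ of the target $v=(a,b)$. $\langle A\rangle_\theta=\langle\phi_{\mathrm w}(\theta)|A|\phi_{\mathrm w}(\theta)\rangle$. *)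

theory Defs
  imports Complex_Main
begin

type_synonym site = "nat \<times> nat"
type_synonym config = "site \<Rightarrow> bool"
type_synonym qstate = "config \<Rightarrow> complex"

definition lattice :: "nat \<Rightarrow> site set" where
  "lattice L = {0..<L} \<times> {0..<L}"

text \<open>Computational basis of the N = L^2 qubits: bit strings supported on the lattice.\<close>
definition configs :: "nat \<Rightarrow> config set" where
  "configs L = {x. \<forall>p. x p \<longrightarrow> p \<in> lattice L}"

definition flip :: "site \<Rightarrow> config \<Rightarrow> config" where
  "flip i x = x(i := \<not> x i)"

text \<open>Single-qubit Paulis acting on state vectors (amplitude functions).
  Basis convention: x i = False is |0>, x i = True is |1>.\<close>
definition pauliX :: "site \<Rightarrow> qstate \<Rightarrow> qstate" where
  "pauliX i \<psi> = (\<lambda>x. \<psi> (flip i x))"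

definition pauliZ :: "site \<Rightarrow> qstate \<Rightarrow> qstate" where
  "pauliZ i \<psi> = (\<lambda>x. (if x i then -1 else 1) * \<psi> x)"

text \<open>Y|0> = i|1>, Y|1> = -i|0>.\<close>
definition pauliY :: "site \<Rightarrow> qstate \<Rightarrow> qstate" where
  "pauliY i \<psi> = (\<lambda>x. (if x i then \<i> else - \<i>) * \<psi> (flip i x))"

definition indeg :: "site \<Rightarrow> nat" where
  "indeg v = (if fst v > 0 then 1 else 0) + (if snd v > 0 then 1 else 0)"

text \<open>G_{u->v}(theta) = exp(-i theta Z_u Y_v / deg v). Since (Z_u Y_v)^2 = 1 (u /= v),
  this exponential equals cos(alpha) 1 - i sin(alpha) Z_u Y_v with alpha = theta/deg v.\<close>
definition gate :: "real \<Rightarrow> site \<times> site \<Rightarrow> qstate \<Rightarrow> qstate" where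
  "gate \<theta> e \<psi> = (let u = fst e; v = snd e; \<alpha> = \<theta> / real (indeg v) in
     (\<lambda>x. complex_of_real (cos \<alpha>) * \<psi> x
          - \<i> * complex_of_real (sin \<alpha>) * pauliZ u (pauliY v \<psi>) x))"

text \<open>Incoming edges of target v = (a,b) (targets always lie in the lattice).\<close>
definition in_edges :: "site \<Rightarrow> (site \<times> site) list" where
  "in_edges v = (let a = fst v; b = snd v in
     (if a \<ge> 1 then [((a - 1, b), v)] else []) @ (if b \<ge> 1 then [((a, b - 1), v)] else []))"

definition whip_edges :: "nat \<Rightarrow> (site \<times> site) list" where
  "whip_edges L = concat (map (\<lambda>k. concat (map (\<lambda>a. in_edges (a, k - a))
       (filter (\<lambda>a. a \<le> k \<and> a < L \<and> k - a < L) [0..<L]))) [1..<2 * L - 1])"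

definition plus_state :: "nat \<Rightarrow> qstate" where
  "plus_state L = (\<lambda>x. if x \<in> configs L then complex_of_real ((1 / sqrt 2) ^ (L * L)) else 0)"

text \<open>Whip state: gates applied in list order (first element applied first).\<close>
definition whip_state :: "nat \<Rightarrow> real \<Rightarrow> qstate" where
  "whip_state L \<theta> = fold (gate \<theta>) (whip_edges L) (plus_state L)"

definition expect :: "nat \<Rightarrow> qstate \<Rightarrow> (qstate \<Rightarrow> qstate) \<Rightarrow> complex" where
  "expect L \<psi> A = (\<Sum>x\<in>configs L. cnj (\<psi> x) * A \<psi> x)"

definition boundary' :: "nat \<Rightarrow> site set" where
  "boundary' L = {(L - 1, b) | b. b \<le> L - 2} \<union> {(a, L - 1) | a. a \<le> L - 2}"

definition boundaryX :: "nat \<Rightarrow> real \<Rightarrow> complex" where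
  "boundaryX L \<theta> = (\<Sum>i\<in>boundary' L. expect L (whip_state L \<theta>) (pauliX i))"

end

theory Submission
  imports Defs
begin

definition zv :: "bool \<Rightarrow> real" where "zv b = (if b then -1 else 1)"
definition gg :: "bool \<Rightarrow> real \<Rightarrow> real" where
  "gg b t = (cos t + (if b then 1 else -1) * sin t) / sqrt 2"
definition betaP :: "real \<Rightarrow> (site \<times> site) list \<Rightarrow> site \<Rightarrow> config \<Rightarrow> real" where
  "betaP \<theta> P v x = sum_list (map (\<lambda>e. \<theta> / real (indeg v) * zv (x (fst e))) (filter (\<lambda>e. snd e = v) P))"
definition stP :: "nat \<Rightarrow> real \<Rightarrow> (site \<times> site) list \<Rightarrow> qstate" where
  "stP L \<theta> P = (\<lambda>x. if x \<in> configs L then complex_of_real (\<Prod>v\<in>lattice L. gg (x v) (betaP \<theta> P v x)) else 0)"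

lemma flip_configs: "v \<in> lattice L \<Longrightarrow> flip v x \<in> configs L \<longleftrightarrow> x \<in> configs L"
  unfolding configs_def flip_def by (auto split: if_splits)

lemma finite_lattice[simp]: "finite (lattice L)" by (simp add: lattice_def)

lemma betaP_flip: "(\<forall>e\<in>set P. fst e \<noteq> v) \<Longrightarrow> betaP \<theta> P w (flip v x) = betaP \<theta> P w x"
  unfolding betaP_def flip_def
  by (induction P) auto

lemma betaP_snoc: "betaP \<theta> (P @ [(u,v)]) w x = betaP \<theta> P w x + (if w = v then \<theta> / real (indeg v) * zv (x u) else 0)"
  unfolding betaP_def by auto

lemma gg_step: "cos a * gg b t + sin a * zv c * (if b then 1 else -1) * gg (\<not> b) t = gg b (t + a * zv c)"
  unfolding gg_def zv_def
  by (cases b; cases c) (auto simp: sin_add cos_add sin_diff cos_diff field_simps)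

lemma gate_step:
  assumes u: "u \<in> lattice L" and v: "v \<in> lattice L" and uv: "u \<noteq> v"
    and P: "\<forall>e\<in>set P. fst e \<noteq> v"
  shows "gate \<theta> (u,v) (stP L \<theta> P) = stP L \<theta> (P @ [(u,v)])"
proof
  fix x
  define a where "a = \<theta> / real (indeg v)"
  show "gate \<theta> (u,v) (stP L \<theta> P) x = stP L \<theta> (P @ [(u,v)]) x"
  proof (cases "x \<in> configs L")
    case False
    then show ?thesis using flip_configs[OF v, of x]
      by (simp add: gate_def stP_def pauliZ_def pauliY_def Let_def)
  next
    case True
    define R where "R = (\<Prod>w\<in>lattice L - {v}. gg (x w) (betaP \<theta> P w x))"
    have e1: "(\<Prod>w\<in>lattice L. gg (x w) (betaP \<theta> P w x)) = gg (x v) (betaP \<theta> P v x) * R"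
      unfolding R_def using v by (simp add: prod.remove)
    have e2: "(\<Prod>w\<in>lattice L. gg (flip v x w) (betaP \<theta> P w (flip v x))) = gg (\<not> x v) (betaP \<theta> P v x) * R"
    proof -
      have "(\<Prod>w\<in>lattice L. gg (flip v x w) (betaP \<theta> P w (flip v x))) =
            (\<Prod>w\<in>lattice L. gg (flip v x w) (betaP \<theta> P w x))"
        using betaP_flip[OF P] by simp
      also have "\<dots> = gg (\<not> x v) (betaP \<theta> P v x) * R"
        unfolding R_def using v by (simp add: prod.remove flip_def)
      finally show ?thesis .
    qed
    have e3: "(\<Prod>w\<in>lattice L. gg (x w) (betaP \<theta> (P @ [(u,v)]) w x)) = gg (x v) (betaP \<theta> P v x + a * zv (x u)) * R"
    proof -
      have "(\<Prod>w\<in>lattice L. gg (x w) (betaP \<theta> (P @ [(u,v)]) w x)) =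
           gg (x v) (betaP \<theta> (P @ [(u,v)]) v x) * (\<Prod>w\<in>lattice L - {v}. gg (x w) (betaP \<theta> (P @ [(u,v)]) w x))"
        using v by (simp add: prod.remove)
      also have "(\<Prod>w\<in>lattice L - {v}. gg (x w) (betaP \<theta> (P @ [(u,v)]) w x)) = R"
        unfolding R_def by (rule prod.cong) (auto simp: betaP_snoc)
      finally show ?thesis by (simp add: betaP_snoc a_def)
    qed
    have key: "cos a * gg (x v) (betaP \<theta> P v x) + sin a * zv (x u) * (if x v then 1 else -1) * gg (\<not> x v) (betaP \<theta> P v x)
       = gg (x v) (betaP \<theta> P v x + a * zv (x u))" by (rule gg_step)
    have fx: "flip v x \<in> configs L" using flip_configs[OF v] True by simp
    have "gate \<theta> (u,v) (stP L \<theta> P) x = complex_of_real (cos a * (gg (x v) (betaP \<theta> P v x) * R))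
        - \<i> * complex_of_real (sin a) * ((if x u then -1 else 1) * ((if x v then \<i> else - \<i>) *
           complex_of_real (gg (\<not> x v) (betaP \<theta> P v x) * R)))"
      using True fx e1 e2 uv by (simp add: gate_def stP_def pauliZ_def pauliY_def a_def flip_def Let_def)
    also have "\<dots> = complex_of_real ((cos a * gg (x v) (betaP \<theta> P v x) + sin a * zv (x u) * (if x v then 1 else -1) * gg (\<not> x v) (betaP \<theta> P v x)) * R)"
      by (cases "x u"; cases "x v") (simp_all add: zv_def algebra_simps)
    also have "\<dots> = stP L \<theta> (P @ [(u,v)]) x"
      using True e3 key by (simp add: stP_def)
    finally show ?thesis .
  qed
qed

definition diag :: "site \<Rightarrow> nat" where "diag v = fst v + snd v"

lemma in_edges_set: "e \<in> set (in_edges w) \<longleftrightarrow>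
   snd e = w \<and> ((fst w \<ge> 1 \<and> fst e = (fst w - 1, snd w)) \<or> (snd w \<ge> 1 \<and> fst e = (fst w, snd w - 1)))"
  by (cases e; cases w) (auto simp: in_edges_def Let_def)

lemma whip_edges_set: "e \<in> set (whip_edges L) \<longleftrightarrow> snd e \<in> lattice L \<and> snd e \<noteq> (0,0) \<and> e \<in> set (in_edges (snd e))"
proof -
  obtain u a b where e: "e = (u, (a,b))" by (metis prod.collapse)
  have "e \<in> set (whip_edges L) \<longleftrightarrow> (\<exists>k. 1 \<le> k \<and> k < 2*L - 1 \<and> (\<exists>a'. a' \<le> k \<and> a' < L \<and> k - a' < L \<and> e \<in> set (in_edges (a', k - a'))))"
    by (auto simp: whip_edges_def)
  also have "\<dots> \<longleftrightarrow> (a,b) \<in> lattice L \<and> (a,b) \<noteq> (0,0) \<and> e \<in> set (in_edges (a,b))"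
  proof
    assume "\<exists>k. 1 \<le> k \<and> k < 2*L - 1 \<and> (\<exists>a'. a' \<le> k \<and> a' < L \<and> k - a' < L \<and> e \<in> set (in_edges (a', k - a')))"
    then obtain k a' where h: "1 \<le> k" "k < 2*L-1" "a' \<le> k" "a' < L" "k - a' < L" "e \<in> set (in_edges (a', k - a'))" by blast
    then have "(a,b) = (a', k - a')" using in_edges_set[of e "(a', k-a')"] e by auto
    then show "(a,b) \<in> lattice L \<and> (a,b) \<noteq> (0,0) \<and> e \<in> set (in_edges (a,b))" using h by (auto simp: lattice_def)
  next
    assume h: "(a,b) \<in> lattice L \<and> (a,b) \<noteq> (0,0) \<and> e \<in> set (in_edges (a,b))"
    show "\<exists>k. 1 \<le> k \<and> k < 2*L - 1 \<and> (\<exists>a'. a' \<le> k \<and> a' < L \<and> k - a' < L \<and> e \<in> set (in_edges (a', k - a')))"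
      by (rule exI[of _ "a+b"]) (use h in \<open>auto simp: lattice_def intro!: exI[of _ a]\<close>)
  qed
  finally show ?thesis using e by simp
qed

lemma whip_edges_props: "e \<in> set (whip_edges L) \<Longrightarrow> fst e \<in> lattice L \<and> snd e \<in> lattice L \<and> diag (fst e) < diag (snd e)"
  unfolding whip_edges_set in_edges_set by (auto simp: lattice_def diag_def)

lemma sorted_wrt_all: "(\<forall>x\<in>set xs. \<forall>y\<in>set xs. R x y) \<Longrightarrow> sorted_wrt R xs"
  by (induction xs) auto

lemma sorted_wrt_concat_key:
  assumes "sorted_wrt (<) ks" "\<And>k y. k \<in> set ks \<Longrightarrow> y \<in> set (F k) \<Longrightarrow> key y = (k::nat)"
  shows "sorted_wrt (\<lambda>x y. key x \<le> key y) (concat (map F ks))"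
  using assms
proof (induction ks)
  case Nil then show ?case by simp
next
  case (Cons k ks)
  have "sorted_wrt (\<lambda>x y. key x \<le> key y) (F k)"
  proof (rule sorted_wrt_all, intro ballI)
    fix x y assume "x \<in> set (F k)" "y \<in> set (F k)"
    then have "key x = k" "key y = k" using Cons.prems(2)[of k] by auto
    then show "key x \<le> key y" by simp
  qed
  moreover have "sorted_wrt (\<lambda>x y. key x \<le> key y) (concat (map F ks))"
    using Cons by auto
  moreover have "\<forall>x\<in>set (F k). \<forall>y\<in>set (concat (map F ks)). key x \<le> key y"
    using Cons.prems by fastforce
  ultimately show ?case by (simp add: sorted_wrt_append)
qed

lemma whip_sorted: "sorted_wrt (\<lambda>x y. diag (snd x) \<le> diag (snd y)) (whip_edges L)"
  unfolding whip_edges_def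
  by (rule sorted_wrt_concat_key) (auto simp: in_edges_set diag_def)

lemma fold_stP:
  assumes "\<forall>e\<in>set P. fst e \<in> lattice L \<and> snd e \<in> lattice L \<and> diag (fst e) < diag (snd e)"
    and "sorted_wrt (\<lambda>x y. diag (snd x) \<le> diag (snd y)) P"
  shows "fold (gate \<theta>) P (stP L \<theta> []) = stP L \<theta> P"
  using assms
proof (induction P rule: rev_induct)
  case Nil then show ?case by simp
next
  case (snoc e P)
  obtain u v where e: "e = (u,v)" by (metis prod.collapse)
  have "\<forall>e'\<in>set P. fst e' \<noteq> v"
  proof
    fix e' assume "e' \<in> set P"
    then have "diag (snd e') \<le> diag v" "diag (fst e') < diag (snd e')"
      using snoc.prems e by (auto simp: sorted_wrt_append)
    then show "fst e' \<noteq> v" by auto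
  qed
  moreover have "u \<in> lattice L" "v \<in> lattice L" "u \<noteq> v" using snoc.prems e by auto
  moreover have "fold (gate \<theta>) P (stP L \<theta> []) = stP L \<theta> P"
    using snoc by (auto simp: sorted_wrt_append)
  ultimately show ?case using e gate_step by simp
qed

lemma card_lattice: "card (lattice L) = L * L" by (simp add: lattice_def)

lemma plus_stP: "plus_state L = stP L \<theta> []"
  by (auto simp: plus_state_def stP_def betaP_def gg_def card_lattice power_divide)

lemma concat_if_single: "distinct xs \<Longrightarrow> concat (map (\<lambda>a. if a = a0 then X else []) xs) = (if a0 \<in> set xs then X else [])"
  by (induction xs) auto

lemma filter_in_edges: "filter (\<lambda>e. snd e = v) (in_edges w) = (if w = v then in_edges v else [])"
proof -
  have "\<forall>e\<in>set (in_edges w). snd e = w" by (simp add: in_edges_set)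
  then show ?thesis by (induction "in_edges w") (auto simp: filter_id_conv filter_empty_conv)
qed

lemma filter_whip: assumes "v \<in> lattice L" shows "filter (\<lambda>e. snd e = v) (whip_edges L) = in_edges v"
proof -
  obtain a b where v: "v = (a,b)" by (metis prod.collapse)
  have "filter (\<lambda>e. snd e = v) (whip_edges L) = concat (map (\<lambda>k. concat (map (\<lambda>a'. if a' = a \<and> k = a + b then in_edges v else [])
       (filter (\<lambda>a. a \<le> k \<and> a < L \<and> k - a < L) [0..<L]))) [1..<2 * L - 1])"
    unfolding whip_edges_def filter_concat map_map o_def filter_in_edges
    by (intro arg_cong[where f=concat] map_cong refl) (auto simp: v)
  also have "\<dots> = concat (map (\<lambda>k. if k = a + b then in_edges v else []) [1..<2 * L - 1])"
  proof (intro arg_cong[where f=concat] map_cong refl)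
    fix k assume "k \<in> set [1..<2 * L - 1]"
    show "concat (map (\<lambda>a'. if a' = a \<and> k = a + b then in_edges v else []) (filter (\<lambda>a. a \<le> k \<and> a < L \<and> k - a < L) [0..<L]))
       = (if k = a + b then in_edges v else [])"
    proof (cases "k = a + b")
      case True
      then show ?thesis using concat_if_single[of "filter (\<lambda>a. a \<le> k \<and> a < L \<and> k - a < L) [0..<L]" a "in_edges v"] assms v
        by (simp add: lattice_def)
    next
      case False then show ?thesis by simp
    qed
  qed
  also have "\<dots> = in_edges v"
  proof (cases "a + b = 0")
    case True
    then have "in_edges v = []" by (simp add: v in_edges_def)
    then show ?thesis by auto
  next
    case False
    moreover have "1 \<le> a+b \<and> a+b < 2*L-1" using False assms v by (auto simp: lattice_def)
    ultimately show ?thesis using concat_if_single[of "[1..<2 * L - 1]" "a+b" "in_edges v"] by simp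
  qed
  finally show ?thesis .
qed

definition beta :: "real \<Rightarrow> site \<Rightarrow> config \<Rightarrow> real" where
  "beta \<theta> v x = \<theta> / real (indeg v) * sum_list (map (\<lambda>e. zv (x (fst e))) (in_edges v))"

lemma whip_product: "whip_state L \<theta> = (\<lambda>x. if x \<in> configs L then complex_of_real (\<Prod>v\<in>lattice L. gg (x v) (beta \<theta> v x)) else 0)"
proof -
  have "whip_state L \<theta> = stP L \<theta> (whip_edges L)"
    unfolding whip_state_def plus_stP[of L \<theta>]
    by (rule fold_stP) (use whip_edges_props whip_sorted in auto)
  also have "\<dots> = (\<lambda>x. if x \<in> configs L then complex_of_real (\<Prod>v\<in>lattice L. gg (x v) (beta \<theta> v x)) else 0)"
    unfolding stP_def
  proof (intro ext if_cong refl arg_cong[where f=complex_of_real] prod.cong)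
    fix x v assume "v \<in> lattice L"
    then show "gg (x v) (betaP \<theta> (whip_edges L) v x) = gg (x v) (beta \<theta> v x)"
      by (simp add: betaP_def beta_def filter_whip sum_list_const_mult[symmetric] o_def)
  qed
  finally show ?thesis .
qed

definition par :: "site \<Rightarrow> site set" where "par v = fst ` set (in_edges v)"
definition cfg :: "site set \<Rightarrow> config set" where "cfg V = {x. \<forall>p. x p \<longrightarrow> p \<in> V}"
definition anc :: "site set \<Rightarrow> bool" where "anc V \<longleftrightarrow> (\<forall>v\<in>V. par v \<subseteq> V)"
definition loc :: "(site \<Rightarrow> config \<Rightarrow> real) \<Rightarrow> bool" where
  "loc h \<longleftrightarrow> (\<forall>v x y. (\<forall>w\<in>insert v (par v). x w = y w) \<longrightarrow> h v x = h v y)"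

lemma par_diag: "u \<in> par v \<Longrightarrow> diag u + 1 = diag v"
  by (auto simp: par_def in_edges_set diag_def)

lemma finite_cfg: "finite V \<Longrightarrow> finite (cfg V)"
proof -
  assume "finite V"
  have "cfg V = (\<lambda>S p. p \<in> S) ` Pow V"
  proof
    show "cfg V \<subseteq> (\<lambda>S p. p \<in> S) ` Pow V"
    proof
      fix x assume "x \<in> cfg V"
      then have "x = (\<lambda>p. p \<in> {p. x p})" "{p. x p} \<in> Pow V" by (auto simp: cfg_def)
      then show "x \<in> (\<lambda>S p. p \<in> S) ` Pow V" by blast
    qed
  qed (auto simp: cfg_def)
  then show ?thesis using \<open>finite V\<close> by simp
qed

lemma sum_cfg_split:
  assumes "finite V" "v \<in> V"
  shows "(\<Sum>x\<in>cfg V. f x) = (\<Sum>x\<in>cfg (V - {v}). f (x(v:=True)) + f (x(v:=False)))"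
proof -
  have eq: "cfg V = (\<lambda>x. x(v:=True)) ` cfg (V - {v}) \<union> (\<lambda>x. x(v:=False)) ` cfg (V - {v})"
  proof
    show "cfg V \<subseteq> (\<lambda>x. x(v:=True)) ` cfg (V - {v}) \<union> (\<lambda>x. x(v:=False)) ` cfg (V - {v})"
    proof
      fix x assume x: "x \<in> cfg V"
      have "x(v:=False) \<in> cfg (V - {v})" using x by (auto simp: cfg_def)
      moreover have "x = (x(v:=False))(v := x v)" by simp
      ultimately show "x \<in> (\<lambda>x. x(v:=True)) ` cfg (V - {v}) \<union> (\<lambda>x. x(v:=False)) ` cfg (V - {v})"
      proof (cases "x v")
        case True
        then have "x = (x(v:=False))(v:=True)" using fun_upd_idem[of x v True] by simp
        then show ?thesis using \<open>x(v:=False) \<in> cfg (V - {v})\<close> by blast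
      next
        case False
        then have "x = (x(v:=False))(v:=False)" using fun_upd_idem[of x v False] by simp
        then show ?thesis using \<open>x(v:=False) \<in> cfg (V - {v})\<close> by blast
      qed
    qed
  qed (use assms in \<open>auto simp: cfg_def split: if_splits\<close>)
  have inj1: "inj_on (\<lambda>x. x(v:=b)) (cfg (V - {v}))" for b
  proof (rule inj_onI)
    fix x y assume "x \<in> cfg (V - {v})" "y \<in> cfg (V - {v})" "x(v:=b) = y(v:=b)"
    then have "x v = False" "y v = False" unfolding cfg_def by blast+
    show "x = y"
    proof
      fix p show "x p = y p"
        using \<open>x(v:=b) = y(v:=b)\<close> \<open>x v = False\<close> \<open>y v = False\<close> by (cases "p = v") (auto dest: fun_cong[where x=p])
    qed
  qed
  have disj: "(\<lambda>x. x(v:=True)) ` cfg (V - {v}) \<inter> (\<lambda>x. x(v:=False)) ` cfg (V - {v}) = {}"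
  proof (rule equals0I)
    fix y assume "y \<in> (\<lambda>x. x(v:=True)) ` cfg (V - {v}) \<inter> (\<lambda>x. x(v:=False)) ` cfg (V - {v})"
    then obtain x1 x2 where a1: "y = x1(v:=True)" and a2: "y = x2(v:=False)" by blast
    from a1 have "y v" by simp
    moreover from a2 have "\<not> y v" by simp
    ultimately show False by simp
  qed
  have fin: "finite (cfg (V - {v}))" using assms finite_cfg by simp
  have "(\<Sum>x\<in>cfg V. f x) = (\<Sum>x\<in>(\<lambda>x. x(v:=True)) ` cfg (V - {v}). f x) + (\<Sum>x\<in>(\<lambda>x. x(v:=False)) ` cfg (V - {v}). f x)"
    unfolding eq by (rule sum.union_disjoint) (use fin disj in auto)
  also have "\<dots> = (\<Sum>x\<in>cfg (V - {v}). f (x(v:=True))) + (\<Sum>x\<in>cfg (V - {v}). f (x(v:=False)))"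
    using inj1 by (simp add: sum.reindex)
  finally show ?thesis by (simp add: sum.distrib)
qed

lemma marg_step:
  assumes fin: "finite V" and v: "v \<in> V" and nochild: "\<forall>w\<in>V. v \<notin> par w" and h: "loc h"
    and F: "\<forall>x b. F (x(v:=b)) = F x"
  shows "(\<Sum>x\<in>cfg V. F x * (\<Prod>w\<in>V. h w x)) =
         (\<Sum>x\<in>cfg (V - {v}). F x * (\<Prod>w\<in>V - {v}. h w x) * (h v (x(v:=True)) + h v (x(v:=False))))"
proof -
  have hw: "h w (x(v:=b)) = h w x" if "w \<in> V - {v}" for w x b
  proof -
    have "\<forall>u\<in>insert w (par w). (x(v:=b)) u = x u" using nochild that by auto
    then show ?thesis using h unfolding loc_def by blast
  qed
  have pr: "(\<Prod>w\<in>V. h w (x(v:=b))) = h v (x(v:=b)) * (\<Prod>w\<in>V - {v}. h w x)" for x b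
  proof -
    have "(\<Prod>w\<in>V. h w (x(v:=b))) = h v (x(v:=b)) * (\<Prod>w\<in>V - {v}. h w (x(v:=b)))"
      using fin v by (simp add: prod.remove)
    also have "(\<Prod>w\<in>V - {v}. h w (x(v:=b))) = (\<Prod>w\<in>V - {v}. h w x)" using hw by simp
    finally show ?thesis .
  qed
  show ?thesis
    unfolding sum_cfg_split[OF fin v] pr F[rule_format] by (simp add: algebra_simps)
qed

lemma marg:
  assumes "finite V" "anc V" "U \<subseteq> V" "anc U" "loc h"
    and F: "\<forall>x y. (\<forall>w\<in>U. x w = y w) \<longrightarrow> F x = F y"
    and k: "\<forall>v\<in>V - U. \<forall>x. h v (x(v:=True)) + h v (x(v:=False)) = \<kappa> v"
  shows "(\<Sum>x\<in>cfg V. F x * (\<Prod>w\<in>V. h w x)) = (\<Prod>v\<in>V - U. \<kappa> v) * (\<Sum>x\<in>cfg U. F x * (\<Prod>w\<in>U. h w x))"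
  using assms
proof (induction "card (V - U)" arbitrary: V)
  case 0
  then have "V = U" using finite_subset by fastforce
  then show ?case by simp
next
  case (Suc n)
  have fVU: "finite (V - U)" "V - U \<noteq> {}" using Suc by auto
  define m where "m = Max (diag ` (V - U))"
  have "m \<in> diag ` (V - U)" using Max_in[of "diag ` (V - U)"] fVU m_def by auto
  then obtain v where v: "v \<in> V - U" "diag v = m" by blast
  have vmax: "\<forall>w\<in>V - U. diag w \<le> diag v" using v fVU m_def by auto
  have nochild: "\<forall>w\<in>V. v \<notin> par w"
  proof (intro ballI notI)
    fix w assume w: "w \<in> V" "v \<in> par w"
    show False
    proof (cases "w \<in> U")
      case True then show False using Suc.prems(4) w v unfolding anc_def by auto
    next
      case False
      then have "diag w \<le> diag v" using vmax w by auto
      then show False using par_diag[OF w(2)] by simp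
    qed
  qed
  have Fv: "\<forall>x b. F (x(v:=b)) = F x" using Suc.prems(6) v by auto
  have "(\<Sum>x\<in>cfg V. F x * (\<Prod>w\<in>V. h w x)) =
         (\<Sum>x\<in>cfg (V - {v}). F x * (\<Prod>w\<in>V - {v}. h w x) * (h v (x(v:=True)) + h v (x(v:=False))))"
    using v by (intro marg_step) (use Suc.prems nochild Fv in auto)
  also have "\<dots> = \<kappa> v * (\<Sum>x\<in>cfg (V - {v}). F x * (\<Prod>w\<in>V - {v}. h w x))"
    using Suc.prems(7) v by (simp add: sum_distrib_left algebra_simps)
  also have "(\<Sum>x\<in>cfg (V - {v}). F x * (\<Prod>w\<in>V - {v}. h w x)) = (\<Prod>v\<in>V - {v} - U. \<kappa> v) * (\<Sum>x\<in>cfg U. F x * (\<Prod>w\<in>U. h w x))"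
  proof (rule Suc.hyps)
    show "n = card (V - {v} - U)" using Suc.hyps(2) v fVU by (simp add: Diff_insert2[symmetric] card_Diff_singleton insert_Diff_single)
    show "anc (V - {v})" using Suc.prems(2) nochild unfolding anc_def by auto
  qed (use Suc.prems v in auto)
  also have "\<kappa> v * ((\<Prod>v\<in>V - {v} - U. \<kappa> v) * X) = (\<Prod>v\<in>V - U. \<kappa> v) * X" for X
  proof -
    have "V - {v} - U = (V - U) - {v}" by auto
    then show ?thesis using v fVU by (simp add: prod.remove)
  qed
  finally show ?case .
qed

lemma configs_cfg: "configs L = cfg (lattice L)" by (simp add: configs_def cfg_def)

lemma beta_loc: "(\<forall>w\<in>par v. x w = y w) \<Longrightarrow> beta \<theta> v x = beta \<theta> v y"
  unfolding beta_def par_def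
  by (intro arg_cong[where f="\<lambda>s. \<theta> / real (indeg v) * s"] arg_cong[where f=sum_list] map_cong) auto

lemma beta_flip_notpar: "i \<notin> par v \<Longrightarrow> beta \<theta> v (flip i x) = beta \<theta> v x"
  by (rule beta_loc) (auto simp: flip_def)

lemma beta_flip_par: "i \<in> par v \<Longrightarrow> beta \<theta> v (flip i x) = beta \<theta> v x + \<theta> / real (indeg v) * (zv (\<not> x i) - zv (x i))"
  by (cases v) (auto simp: par_def in_edges_def beta_def flip_def algebra_simps split: if_splits)

definition hw :: "real \<Rightarrow> site \<Rightarrow> config \<Rightarrow> real" where
  "hw \<theta> w x = (gg (x w) (beta \<theta> w x))\<^sup>2"

lemma loc_hw: "loc (hw \<theta>)"
  unfolding loc_def hw_def
proof (intro allI impI)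
  fix v and x y :: config assume "\<forall>w\<in>insert v (par v). x w = y w"
  then show "(gg (x v) (beta \<theta> v x))\<^sup>2 = (gg (y v) (beta \<theta> v y))\<^sup>2"
    using beta_loc[of v x y \<theta>] by auto
qed

lemma gg_sq_sum: "(gg True t)\<^sup>2 + (gg False t)\<^sup>2 = 1"
  by (simp add: gg_def power2_eq_square field_simps)

lemma hw_sum: "hw \<theta> v (x(v:=True)) + hw \<theta> v (x(v:=False)) = 1"
proof -
  have "v \<notin> par v" using par_diag by fastforce
  then have "beta \<theta> v (x(v:=b)) = beta \<theta> v x" for b by (intro beta_loc) auto
  then show ?thesis by (simp add: hw_def gg_sq_sum)
qed

lemma E_indep:
  assumes "finite V" "anc V" "U \<subseteq> V" "anc U"
    and F: "\<forall>x y. (\<forall>w\<in>U. x w = y w) \<longrightarrow> F x = F y"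
  shows "(\<Sum>x\<in>cfg V. F x * (\<Prod>w\<in>V. hw \<theta> w x)) = (\<Sum>x\<in>cfg U. F x * (\<Prod>w\<in>U. hw \<theta> w x))"
  using marg[OF assms(1-4) loc_hw F, where \<kappa>="\<lambda>_. 1"] hw_sum by simp

lemma cfg_empty: "cfg {} = {\<lambda>_. False}" by (auto simp: cfg_def)

lemma E_one:
  assumes "finite V" "anc V"
  shows "(\<Sum>x\<in>cfg V. (\<Prod>w\<in>V. hw \<theta> w x)) = 1"
  using E_indep[OF assms, of "{}" "\<lambda>_. 1" \<theta>] by (simp add: anc_def cfg_empty)

lemma anc_Int: "anc A \<Longrightarrow> anc B \<Longrightarrow> anc (A \<inter> B)" by (auto simp: anc_def)

lemma E_indep2:
  assumes "finite V" "anc V" "finite V'" "anc V'" "U \<subseteq> V" "U \<subseteq> V'"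
    and F: "\<forall>x y. (\<forall>w\<in>U. x w = y w) \<longrightarrow> F x = F y"
  shows "(\<Sum>x\<in>cfg V. F x * (\<Prod>w\<in>V. hw \<theta> w x)) = (\<Sum>x\<in>cfg V'. F x * (\<Prod>w\<in>V'. hw \<theta> w x))"
proof -
  have F': "\<forall>x y. (\<forall>w\<in>V \<inter> V'. x w = y w) \<longrightarrow> F x = F y" using F assms(5,6) by blast
  have "(\<Sum>x\<in>cfg V. F x * (\<Prod>w\<in>V. hw \<theta> w x)) = (\<Sum>x\<in>cfg (V \<inter> V'). F x * (\<Prod>w\<in>V \<inter> V'. hw \<theta> w x))"
    by (rule E_indep) (use assms F' anc_Int in auto)
  also have "\<dots> = (\<Sum>x\<in>cfg V'. F x * (\<Prod>w\<in>V'. hw \<theta> w x))"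
    by (rule E_indep[symmetric]) (use assms F' anc_Int in auto)
  finally show ?thesis .
qed

definition R :: "site \<Rightarrow> site set" where "R i = {v. fst v \<le> fst i \<and> snd v \<le> snd i}"
definition kap :: "real \<Rightarrow> site \<Rightarrow> site \<Rightarrow> real" where
  "kap \<theta> i v = (if i \<in> par v then cos (2 * \<theta> / real (indeg v)) else 1)"
definition h2 :: "real \<Rightarrow> site \<Rightarrow> site \<Rightarrow> config \<Rightarrow> real" where
  "h2 \<theta> i v x = gg (x v) (beta \<theta> v x) * gg (flip i x v) (beta \<theta> v (flip i x))"

lemma par_le: "u \<in> par v \<Longrightarrow> fst u \<le> fst v \<and> snd u \<le> snd v \<and> u \<noteq> v"
  by (auto simp: par_def in_edges_set)

lemma finite_R: "finite (R i)"
proof -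
  have "R i \<subseteq> {0..fst i} \<times> {0..snd i}" by (auto simp: R_def)
  then show ?thesis using finite_subset by blast
qed

lemma anc_R: "anc (R i)" by (auto simp: anc_def R_def dest!: par_le)
lemma anc_R': "anc (R i - {i})" by (auto simp: anc_def R_def dest!: par_le)
lemma anc_lattice: "anc (lattice L)" by (auto simp: anc_def lattice_def dest!: par_le)
lemma R_lattice: "i \<in> lattice L \<Longrightarrow> R i \<subseteq> lattice L" by (auto simp: R_def lattice_def)
lemma not_par_self: "v \<notin> par v" using par_diag by fastforce

lemma gg_cross: "gg True t * gg True t' + gg False t * gg False t' = cos (t - t')"
  by (simp add: gg_def cos_diff field_simps)
lemma gg_anti: "gg True t * gg False t + gg False t * gg True t = cos (2 * t)"
  by (simp only: cos_double) (simp add: gg_def power2_eq_square field_simps)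

lemma loc_h2: "loc (h2 \<theta> i)"
  unfolding loc_def
proof (intro allI impI)
  fix v and x y :: config assume a: "\<forall>w\<in>insert v (par v). x w = y w"
  then have "beta \<theta> v x = beta \<theta> v y" by (intro beta_loc) auto
  moreover have "beta \<theta> v (flip i x) = beta \<theta> v (flip i y)" using a by (intro beta_loc) (auto simp: flip_def)
  moreover have "flip i x v = flip i y v" "x v = y v" using a by (auto simp: flip_def)
  ultimately show "h2 \<theta> i v x = h2 \<theta> i v y" by (simp add: h2_def)
qed

lemma h2_other: "v \<noteq> i \<Longrightarrow> i \<notin> par v \<Longrightarrow> h2 \<theta> i v x = hw \<theta> v x"
  using beta_flip_notpar[of i v \<theta> x] by (simp add: h2_def hw_def flip_def power2_eq_square)

lemma h2_child: assumes "v \<noteq> i" "i \<in> par v"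
  shows "h2 \<theta> i v (x(v:=True)) + h2 \<theta> i v (x(v:=False)) = kap \<theta> i v"
proof -
  have b1: "beta \<theta> v (y(v:=b)) = beta \<theta> v y" for y b using not_par_self by (intro beta_loc) auto
  have fl: "flip i (x(v:=b)) = (flip i x)(v:=b)" for b using assms by (intro ext) (auto simp: flip_def)
  define t where "t = beta \<theta> v x"
  define d where "d = \<theta> / real (indeg v) * (zv (\<not> x i) - zv (x i))"
  have "h2 \<theta> i v (x(v:=b)) = gg b t * gg b (t + d)" for b
    unfolding h2_def fl b1 using beta_flip_par[OF assms(2), of \<theta> x] assms(1)
    by (simp add: t_def d_def flip_def)
  then have "h2 \<theta> i v (x(v:=True)) + h2 \<theta> i v (x(v:=False)) = cos (t - (t + d))" by (simp add: gg_cross)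
  also have "\<dots> = cos (2 * \<theta> / real (indeg v))"
    by (cases "x i") (simp_all add: d_def zv_def ac_simps)
  finally show ?thesis using assms by (simp add: kap_def)
qed

lemma h2_self: "h2 \<theta> i i (x(i:=True)) + h2 \<theta> i i (x(i:=False)) = cos (2 * beta \<theta> i x)"
proof -
  have b1: "beta \<theta> i (y(i:=b)) = beta \<theta> i y" for y b using not_par_self by (intro beta_loc) auto
  have "flip i (x(i:=b)) = x(i := \<not> b)" for b by (auto simp: flip_def)
  then show ?thesis unfolding h2_def using b1 gg_anti[of "beta \<theta> i x"] by (simp add: flip_def)
qed

lemma expect_real: assumes "i \<in> lattice L"
  shows "expect L (whip_state L \<theta>) (pauliX i) = complex_of_real (\<Sum>x\<in>cfg (lattice L). \<Prod>v\<in>lattice L. h2 \<theta> i v x)"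
proof -
  have "expect L (whip_state L \<theta>) (pauliX i) = (\<Sum>x\<in>configs L. complex_of_real (\<Prod>v\<in>lattice L. h2 \<theta> i v x))"
    unfolding expect_def
  proof (rule sum.cong[OF refl])
    fix x assume x: "x \<in> configs L"
    then have fx: "flip i x \<in> configs L" using flip_configs[OF assms] by simp
    show "cnj (whip_state L \<theta> x) * pauliX i (whip_state L \<theta>) x = complex_of_real (\<Prod>v\<in>lattice L. h2 \<theta> i v x)"
      using x fx by (simp add: whip_product pauliX_def h2_def prod.distrib)
  qed
  then show ?thesis by (simp add: configs_cfg)
qed

lemma expectX: assumes "i \<in> lattice L"
  shows "expect L (whip_state L \<theta>) (pauliX i) = complex_of_real ((\<Prod>v\<in>lattice L - R i. kap \<theta> i v) *
     (\<Sum>x\<in>cfg (R i - {i}). cos (2 * beta \<theta> i x) * (\<Prod>w\<in>R i - {i}. hw \<theta> w x)))"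
proof -
  have iR: "i \<in> R i" by (simp add: R_def)
  have "(\<Sum>x\<in>cfg (lattice L). \<Prod>v\<in>lattice L. h2 \<theta> i v x) = (\<Sum>x\<in>cfg (lattice L). 1 * (\<Prod>v\<in>lattice L. h2 \<theta> i v x))" by simp
  also have "\<dots> = (\<Prod>v\<in>lattice L - R i. kap \<theta> i v) * (\<Sum>x\<in>cfg (R i). 1 * (\<Prod>v\<in>R i. h2 \<theta> i v x))"
  proof (rule marg[OF finite_lattice anc_lattice R_lattice[OF assms] anc_R loc_h2])
    show "\<forall>v\<in>lattice L - R i. \<forall>x. h2 \<theta> i v (x(v := True)) + h2 \<theta> i v (x(v := False)) = kap \<theta> i v"
    proof (intro ballI allI)
      fix v x assume v: "v \<in> lattice L - R i"
      then have vi: "v \<noteq> i" using iR by auto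
      show "h2 \<theta> i v (x(v := True)) + h2 \<theta> i v (x(v := False)) = kap \<theta> i v"
      proof (cases "i \<in> par v")
        case True then show ?thesis using h2_child vi by blast
      next
        case False then show ?thesis using h2_other[OF vi False] hw_sum by (simp add: kap_def)
      qed
    qed
  qed simp
  also have "(\<Sum>x\<in>cfg (R i). 1 * (\<Prod>v\<in>R i. h2 \<theta> i v x)) =
     (\<Sum>x\<in>cfg (R i - {i}). 1 * (\<Prod>w\<in>R i - {i}. h2 \<theta> i w x) * (h2 \<theta> i i (x(i:=True)) + h2 \<theta> i i (x(i:=False))))"
  proof (rule marg_step[OF finite_R iR _ loc_h2])
    show "\<forall>w\<in>R i. i \<notin> par w" by (auto simp: R_def dest!: par_le)
  qed simp
  also have "\<dots> = (\<Sum>x\<in>cfg (R i - {i}). cos (2 * beta \<theta> i x) * (\<Prod>w\<in>R i - {i}. hw \<theta> w x))"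
  proof (rule sum.cong[OF refl])
    fix x
    have "(\<Prod>w\<in>R i - {i}. h2 \<theta> i w x) = (\<Prod>w\<in>R i - {i}. hw \<theta> w x)"
    proof (rule prod.cong[OF refl])
      fix w assume w: "w \<in> R i - {i}"
      have "i \<notin> par w" using w by (auto simp: R_def dest!: par_le) (metis le_antisym prod.collapse)+
      then show "h2 \<theta> i w x = hw \<theta> w x" using w h2_other by auto
    qed
    then show "1 * (\<Prod>w\<in>R i - {i}. h2 \<theta> i w x) * (h2 \<theta> i i (x(i:=True)) + h2 \<theta> i i (x(i:=False))) =
       cos (2 * beta \<theta> i x) * (\<Prod>w\<in>R i - {i}. hw \<theta> w x)" by (simp add: h2_self)
  qed
  finally have eq: "(\<Sum>x\<in>cfg (lattice L). \<Prod>v\<in>lattice L. h2 \<theta> i v x) = (\<Prod>v\<in>lattice L - R i. kap \<theta> i v) *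
     (\<Sum>x\<in>cfg (R i - {i}). cos (2 * beta \<theta> i x) * (\<Prod>w\<in>R i - {i}. hw \<theta> w x))" .
  show ?thesis unfolding expect_real[OF assms] eq by (rule refl)
qed

definition Dg :: "nat \<Rightarrow> site set" where "Dg d = {v. diag v \<le> d}"
definition pos :: "nat \<Rightarrow> nat \<Rightarrow> site" where "pos d j = (j, d - j)"
definition C :: "real \<Rightarrow> nat \<Rightarrow> nat \<Rightarrow> nat \<Rightarrow> real" where
  "C \<theta> d j k = (\<Sum>x\<in>cfg (Dg d). zv (x (pos d j)) * zv (x (pos d k)) * (\<Prod>w\<in>Dg d. hw \<theta> w x))"
definition P :: "nat \<Rightarrow> nat \<Rightarrow> nat set" where
  "P d j = (if 1 \<le> j then {j - 1} else {}) \<union> (if j \<le> d then {j} else {})"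

lemma finite_Dg: "finite (Dg d)"
proof -
  have "Dg d \<subseteq> {0..d} \<times> {0..d}" by (auto simp: Dg_def diag_def)
  then show ?thesis using finite_subset by blast
qed

lemma anc_Dg: "anc (Dg d)" by (auto simp: anc_def Dg_def dest!: par_diag)

lemma pos_Dg: "j \<le> d \<Longrightarrow> pos d j \<in> Dg d" by (simp add: pos_def Dg_def diag_def)
lemma diag_pos: "j \<le> d \<Longrightarrow> diag (pos d j) = d" by (simp add: pos_def diag_def)

lemma zv_sq: "zv b * zv b = 1" by (simp add: zv_def)

lemma C_any:
  assumes "finite V" "anc V" "pos d j \<in> V" "pos d k \<in> V" "j \<le> d" "k \<le> d"
  shows "(\<Sum>x\<in>cfg V. zv (x (pos d j)) * zv (x (pos d k)) * (\<Prod>w\<in>V. hw \<theta> w x)) = C \<theta> d j k"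
  unfolding C_def
  by (rule E_indep2[where U="{pos d j, pos d k}"]) (use assms finite_Dg anc_Dg pos_Dg in auto)

lemma C_diag: "j \<le> d \<Longrightarrow> C \<theta> d j j = 1"
  unfolding C_def using E_one[OF finite_Dg[of d] anc_Dg[of d], of \<theta>] by (simp add: zv_sq)

lemma sin_zv: "sin (a * zv b) = zv b * sin a" by (simp add: zv_def)
lemma sin_zv2: "sin (2 * (a * zv b)) = zv b * sin (2 * a)" by (simp add: zv_def)

lemma sin_beta:
  assumes "j \<le> d + 1"
  shows "sin (2 * beta \<theta> (pos (d+1) j) x) = sin (2 * \<theta>) * (\<Sum>j'\<in>P d j. zv (x (pos d j'))) / real (card (P d j))"
proof -
  consider "j = 0" | "j = d + 1" | "1 \<le> j \<and> j \<le> d" using assms by linarith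
  then show ?thesis
  proof cases
    case 1
    then show ?thesis by (simp add: beta_def pos_def in_edges_def indeg_def P_def sin_zv2)
  next
    case 2
    then show ?thesis by (simp add: beta_def pos_def in_edges_def indeg_def P_def sin_zv2)
  next
    case 3
    then have Pj: "P d j = {j - 1, j}" "card (P d j) = 2" by (auto simp: P_def)
    have "d + 1 - j \<ge> 1" using 3 by arith
    then have b: "beta \<theta> (pos (d+1) j) x = \<theta> / 2 * (zv (x (j - 1, d + 1 - j)) + zv (x (j, d - j)))"
      using 3 by (simp add: beta_def pos_def in_edges_def indeg_def Let_def)
    have pp: "pos d (j - 1) = (j - 1, d + 1 - j)" "pos d j = (j, d - j)" using 3 by (auto simp: pos_def)
    have sP: "(\<Sum>j'\<in>P d j. zv (x (pos d j'))) = zv (x (j - 1, d + 1 - j)) + zv (x (j, d - j))"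
    proof -
      have "j - 1 \<noteq> j" using 3 by arith
      then show ?thesis unfolding Pj(1) using pp by simp
    qed
    show ?thesis unfolding b sP Pj(2)
      by (cases "x (j - 1, d + 1 - j)"; cases "x (j, d - j)") (simp_all add: zv_def sin_double)
  qed
qed

lemma gg_zv: "zv True * (gg True t)\<^sup>2 + zv False * (gg False t)\<^sup>2 = - sin (2 * t)"
proof -
  have "zv True * (gg True t)\<^sup>2 + zv False * (gg False t)\<^sup>2 = ((cos t - sin t)\<^sup>2 - (cos t + sin t)\<^sup>2) / 2"
    by (simp add: gg_def zv_def power_divide)
  also have "\<dots> = - (2 * sin t * cos t)" by (simp add: power2_eq_square algebra_simps)
  also have "\<dots> = - sin (2 * t)" by (simp add: sin_double)
  finally show ?thesis .
qed

 lemma P_le: "j \<le> d + 1 \<Longrightarrow> j' \<in> P d j \<Longrightarrow> j' \<le> d" by (auto simp: P_def split: if_splits)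
lemma finite_P: "finite (P d j)" by (simp add: P_def)

lemma C_rec:
  assumes jk: "j \<le> d + 1" "k \<le> d + 1" "j \<noteq> k"
  shows "C \<theta> (d+1) j k = (sin (2 * \<theta>))\<^sup>2 * (\<Sum>j'\<in>P d j. \<Sum>k'\<in>P d k. C \<theta> d j' k') / real (card (P d j) * card (P d k))"
proof -
  define p where "p = pos (d+1) j"
  define q where "q = pos (d+1) k"
  define U where "U = insert p (insert q (Dg d))"
  have pq: "p \<noteq> q" using jk by (simp add: p_def q_def pos_def)
  have dp: "diag p = d + 1" "diag q = d + 1" using jk by (simp_all add: p_def q_def diag_pos)
  have pnD: "p \<notin> Dg d" "q \<notin> Dg d" using dp by (auto simp: Dg_def)
  have parD: "par v \<subseteq> Dg d" if "diag v = d + 1" for v using that par_diag by (fastforce simp: Dg_def)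
  have "par p \<subseteq> Dg d" "par q \<subseteq> Dg d" using parD dp by auto
  then have ancU: "anc U" using anc_Dg[of d] by (auto simp: anc_def U_def)
  have finU: "finite U" by (simp add: U_def finite_Dg)
  have UD: "U \<subseteq> Dg (d+1)" using dp by (auto simp: U_def Dg_def)
  define h' where "h' = (\<lambda>w x. (if w = p \<or> w = q then zv (x w) else 1) * hw \<theta> w x)"
  have loch': "loc h'"
    unfolding loc_def h'_def
  proof (intro allI impI)
    fix v and x y :: config assume a: "\<forall>w\<in>insert v (par v). x w = y w"
    then have "hw \<theta> v x = hw \<theta> v y" using loc_hw[of \<theta>] unfolding loc_def by blast
    moreover have "x v = y v" using a by simp
    ultimately show "(if v = p \<or> v = q then zv (x v) else 1) * hw \<theta> v x = (if v = p \<or> v = q then zv (y v) else 1) * hw \<theta> v y"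
      by simp
  qed
  have "C \<theta> (d+1) j k = (\<Sum>x\<in>cfg U. zv (x p) * zv (x q) * (\<Prod>w\<in>U. hw \<theta> w x))"
    unfolding C_def p_def q_def
    by (rule E_indep) (use finite_Dg anc_Dg UD ancU in \<open>auto simp: U_def p_def q_def\<close>)
  also have "\<dots> = (\<Sum>x\<in>cfg U. 1 * (\<Prod>w\<in>U. h' w x))"
  proof (rule sum.cong[OF refl])
    fix x
    have "(\<Prod>w\<in>U. h' w x) = (\<Prod>w\<in>U. (if w = p \<or> w = q then zv (x w) else 1)) * (\<Prod>w\<in>U. hw \<theta> w x)"
      unfolding h'_def by (simp add: prod.distrib)
    also have "(\<Prod>w\<in>U. (if w = p \<or> w = q then zv (x w) else 1)) = zv (x p) * zv (x q)"
    proof -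
      have "(\<Prod>w\<in>Dg d. (if w = p \<or> w = q then zv (x w) else 1)) = 1"
        using pnD by (intro prod.neutral) auto
      then show ?thesis unfolding U_def using pq pnD finite_Dg[of d] by (simp add: prod.insert)
    qed
    finally show "zv (x p) * zv (x q) * (\<Prod>w\<in>U. hw \<theta> w x) = 1 * (\<Prod>w\<in>U. h' w x)" by simp
  qed
  also have "\<dots> = (\<Sum>x\<in>cfg (U - {p}). 1 * (\<Prod>w\<in>U - {p}. h' w x) * (h' p (x(p:=True)) + h' p (x(p:=False))))"
  proof (rule marg_step[OF finU _ _ loch'])
    show "p \<in> U" by (simp add: U_def)
    show "\<forall>w\<in>U. p \<notin> par w"
      using dp par_diag not_par_self unfolding U_def Dg_def by fastforce
  qed simp
  also have "\<dots> = (\<Sum>x\<in>cfg (U - {p}). (- sin (2 * beta \<theta> p x)) * (\<Prod>w\<in>U - {p}. h' w x))"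
  proof (rule sum.cong[OF refl])
    fix x
    have "beta \<theta> p (x(p:=b)) = beta \<theta> p x" for b using not_par_self by (intro beta_loc) auto
    then have "h' p (x(p:=True)) + h' p (x(p:=False)) = - sin (2 * beta \<theta> p x)"
      unfolding h'_def hw_def using gg_zv by simp
    then show "1 * (\<Prod>w\<in>U - {p}. h' w x) * (h' p (x(p:=True)) + h' p (x(p:=False))) =
        (- sin (2 * beta \<theta> p x)) * (\<Prod>w\<in>U - {p}. h' w x)" by simp
  qed
  also have "\<dots> = (\<Sum>x\<in>cfg (U - {p} - {q}). (- sin (2 * beta \<theta> p x)) * (\<Prod>w\<in>U - {p} - {q}. h' w x) * (h' q (x(q:=True)) + h' q (x(q:=False))))"
  proof (rule marg_step)
    show "finite (U - {p})" using finU by simp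
    show "q \<in> U - {p}" using pq by (simp add: U_def)
    show "\<forall>w\<in>U - {p}. q \<notin> par w"
      using dp par_diag not_par_self unfolding U_def Dg_def by fastforce
    show "loc h'" by (rule loch')
    show "\<forall>x b. - sin (2 * beta \<theta> p (x(q := b))) = - sin (2 * beta \<theta> p x)"
    proof (intro allI)
      fix x b
      have "q \<notin> par p" using dp par_diag by fastforce
      then have "beta \<theta> p (x(q := b)) = beta \<theta> p x" by (intro beta_loc) auto
      then show "- sin (2 * beta \<theta> p (x(q := b))) = - sin (2 * beta \<theta> p x)" by simp
    qed
  qed
  also have "U - {p} - {q} = Dg d" using pq pnD by (auto simp: U_def)
  also have "(\<Sum>x\<in>cfg (Dg d). (- sin (2 * beta \<theta> p x)) * (\<Prod>w\<in>Dg d. h' w x) * (h' q (x(q:=True)) + h' q (x(q:=False))))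
     = (\<Sum>x\<in>cfg (Dg d). sin (2 * beta \<theta> p x) * sin (2 * beta \<theta> q x) * (\<Prod>w\<in>Dg d. hw \<theta> w x))"
  proof (rule sum.cong[OF refl])
    fix x
    have "beta \<theta> q (x(q:=b)) = beta \<theta> q x" for b using not_par_self by (intro beta_loc) auto
    then have "h' q (x(q:=True)) + h' q (x(q:=False)) = - sin (2 * beta \<theta> q x)"
      unfolding h'_def hw_def using gg_zv pq by simp
    moreover have "(\<Prod>w\<in>Dg d. h' w x) = (\<Prod>w\<in>Dg d. hw \<theta> w x)"
      using pnD unfolding h'_def by (intro prod.cong) auto
    ultimately show "(- sin (2 * beta \<theta> p x)) * (\<Prod>w\<in>Dg d. h' w x) * (h' q (x(q:=True)) + h' q (x(q:=False))) =
       sin (2 * beta \<theta> p x) * sin (2 * beta \<theta> q x) * (\<Prod>w\<in>Dg d. hw \<theta> w x)" by simp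
  qed
  also have "\<dots> = (\<Sum>x\<in>cfg (Dg d). (sin (2 * \<theta>))\<^sup>2 / real (card (P d j) * card (P d k)) *
        ((\<Sum>j'\<in>P d j. \<Sum>k'\<in>P d k. zv (x (pos d j')) * zv (x (pos d k')) * (\<Prod>w\<in>Dg d. hw \<theta> w x))))"
  proof (rule sum.cong[OF refl])
    fix x
    show "sin (2 * beta \<theta> p x) * sin (2 * beta \<theta> q x) * (\<Prod>w\<in>Dg d. hw \<theta> w x) =
      (sin (2 * \<theta>))\<^sup>2 / real (card (P d j) * card (P d k)) *
        ((\<Sum>j'\<in>P d j. \<Sum>k'\<in>P d k. zv (x (pos d j')) * zv (x (pos d k')) * (\<Prod>w\<in>Dg d. hw \<theta> w x)))"
    proof -
      have AB: "(\<Sum>j'\<in>P d j. zv (x (pos d j'))) * (\<Sum>k'\<in>P d k. zv (x (pos d k'))) * (\<Prod>w\<in>Dg d. hw \<theta> w x)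
          = (\<Sum>j'\<in>P d j. \<Sum>k'\<in>P d k. zv (x (pos d j')) * zv (x (pos d k')) * (\<Prod>w\<in>Dg d. hw \<theta> w x))"
        by (simp add: sum_distrib_left sum_distrib_right mult.assoc) (rule sum.swap)
      show ?thesis
        unfolding p_def q_def sin_beta[OF jk(1)] sin_beta[OF jk(2)] AB[symmetric]
        by (simp add: power2_eq_square)
    qed
  qed
  also have "\<dots> = (sin (2 * \<theta>))\<^sup>2 / real (card (P d j) * card (P d k)) * (\<Sum>j'\<in>P d j. \<Sum>k'\<in>P d k. C \<theta> d j' k')"
    unfolding sum_distrib_left[symmetric] C_def
    by (simp add: sum.swap[of _ "cfg (Dg d)"])
  finally show ?thesis by simp
qed

definition dst :: "nat \<Rightarrow> nat \<Rightarrow> nat" where "dst j k = (if j \<le> k then k - j else j - k)"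
definition mm :: "nat \<Rightarrow> nat \<Rightarrow> nat \<Rightarrow> nat" where "mm d j k = min (min j k) (d - max j k)"

lemma P_nonempty: "j \<le> d + 1 \<Longrightarrow> P d j \<noteq> {}" by (auto simp: P_def)
lemma card_P_pos: "j \<le> d + 1 \<Longrightarrow> card (P d j) > 0"
  using P_nonempty finite_P card_gt_0_iff by blast

lemma C_bound: "j \<le> d \<Longrightarrow> k \<le> d \<Longrightarrow> \<bar>C \<theta> d j k\<bar> \<le> 1"
proof (induction d arbitrary: j k)
  case 0 then show ?case using C_diag[of 0 0 \<theta>] by simp
next
  case (Suc d)
  show ?case
  proof (cases "j = k")
    case True then show ?thesis using C_diag Suc by simp
  next
    case False
    have j: "j \<le> d + 1" and k: "k \<le> d + 1" using Suc by auto
    have "\<bar>\<Sum>j'\<in>P d j. \<Sum>k'\<in>P d k. C \<theta> d j' k'\<bar> \<le> (\<Sum>j'\<in>P d j. \<Sum>k'\<in>P d k. 1)"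
    proof -
      have "\<bar>\<Sum>j'\<in>P d j. \<Sum>k'\<in>P d k. C \<theta> d j' k'\<bar> \<le> (\<Sum>j'\<in>P d j. \<bar>\<Sum>k'\<in>P d k. C \<theta> d j' k'\<bar>)" by (rule sum_abs)
      also have "\<dots> \<le> (\<Sum>j'\<in>P d j. \<Sum>k'\<in>P d k. \<bar>C \<theta> d j' k'\<bar>)" by (intro sum_mono sum_abs)
      also have "\<dots> \<le> (\<Sum>j'\<in>P d j. \<Sum>k'\<in>P d k. 1)"
        by (intro sum_mono Suc.IH) (use P_le j k in auto)
      finally show ?thesis .
    qed
    then have A: "\<bar>\<Sum>j'\<in>P d j. \<Sum>k'\<in>P d k. C \<theta> d j' k'\<bar> \<le> real (card (P d j) * card (P d k))" by simp
    have pos: "real (card (P d j) * card (P d k)) > 0" using card_P_pos[OF j] card_P_pos[OF k] by simp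
    have s: "(sin (2 * \<theta>))\<^sup>2 \<le> 1" by (simp add: abs_square_le_1 abs_sin_le_one)
    have "\<bar>C \<theta> (Suc d) j k\<bar> = (sin (2 * \<theta>))\<^sup>2 * (\<bar>\<Sum>j'\<in>P d j. \<Sum>k'\<in>P d k. C \<theta> d j' k'\<bar> / real (card (P d j) * card (P d k)))"
      using C_rec[OF j k False, of \<theta>] pos by (simp add: abs_mult abs_divide)
    also have "\<dots> \<le> 1 * 1"
      by (rule mult_mono) (use s A pos in \<open>auto simp: divide_le_eq\<close>)
    finally show ?thesis by simp
  qed
qed

lemma rho_id:
  fixes \<rho> s2 :: real
  assumes fp: "s2 * (1 + \<rho>)\<^sup>2 = 4 * \<rho>" and jk: "j \<noteq> k" "1 \<le> j" "1 \<le> k"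
  shows "\<rho> ^ dst j k = s2 * (\<rho> ^ dst (j-1) (k-1) + \<rho> ^ dst (j-1) k + \<rho> ^ dst j (k-1) + \<rho> ^ dst j k) / 4"
proof -
  obtain n where n: "dst j k = n + 1" "dst (j-1) (k-1) = n + 1"
     "\<rho> ^ dst (j-1) k + \<rho> ^ dst j (k-1) = \<rho> ^ n + \<rho> ^ (n + 2)"
  proof (cases "j < k")
    case True
    have e: "dst j k = (k-j-1)+1" "dst (j-1) (k-1) = (k-j-1)+1" "dst (j-1) k = (k-j-1)+2" "dst j (k-1) = k-j-1"
      using True jk by (auto simp: dst_def)
    show ?thesis by (rule that[of "k - j - 1"]) (simp_all only: e add.commute)
  next
    case False
    then have kj: "k < j" using jk by simp
    have e: "dst j k = (j-k-1)+1" "dst (j-1) (k-1) = (j-k-1)+1" "dst (j-1) k = j-k-1" "dst j (k-1) = (j-k-1)+2"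
      using kj jk by (auto simp: dst_def)
    show ?thesis by (rule that[of "j - k - 1"]) (simp_all only: e add.commute)
  qed
  have "s2 * (\<rho> ^ dst (j-1) (k-1) + \<rho> ^ dst (j-1) k + \<rho> ^ dst j (k-1) + \<rho> ^ dst j k) / 4
      = \<rho> ^ n * (s2 * (1 + \<rho>)\<^sup>2) / 4"
    using n by (simp add: power2_eq_square algebra_simps)
  also have "\<dots> = \<rho> ^ (n + 1)" using fp by simp
  finally show ?thesis using n by simp
qed

lemma C_err:
  fixes \<rho> \<theta> :: real
  defines "s2 \<equiv> (sin (2 * \<theta>))\<^sup>2"
  assumes r0: "0 \<le> \<rho>" and r1: "\<rho> \<le> 1" and fp: "s2 * (1 + \<rho>)\<^sup>2 = 4 * \<rho>"
  shows "j \<le> d \<Longrightarrow> k \<le> d \<Longrightarrow> \<bar>C \<theta> d j k - \<rho> ^ dst j k\<bar> \<le> 2 * s2 ^ mm d j k"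
proof (induction d arbitrary: j k)
  case 0 then show ?case using C_diag[of 0 0 \<theta>] by (simp add: dst_def s2_def)
next
  case (Suc d)
  have s0: "0 \<le> s2" and s1: "s2 \<le> 1" by (simp_all add: s2_def abs_square_le_1 abs_sin_le_one)
  show ?case
  proof (cases "j = k")
    case True then show ?thesis using C_diag Suc s0 by (simp add: dst_def)
  next
    case False
    show ?thesis
    proof (cases "mm (Suc d) j k = 0")
      case True
      have "\<bar>C \<theta> (Suc d) j k\<bar> \<le> 1" using C_bound Suc.prems by blast
      moreover have "0 \<le> \<rho> ^ dst j k" "\<rho> ^ dst j k \<le> 1" using r0 r1 by (simp_all add: power_le_one)
      ultimately show ?thesis using True by simp
    next
      case mpos: False
      define m where "m = mm (Suc d) j k"
      have jk: "1 \<le> j" "j \<le> d" "1 \<le> k" "k \<le> d" using mpos Suc.prems by (auto simp: mm_def)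
      have Pj: "P d j = {j - 1, j}" "card (P d j) = 2" "P d k = {k - 1, k}" "card (P d k) = 2"
        using jk by (auto simp: P_def)
      have jj: "j - 1 \<noteq> j" "k - 1 \<noteq> k" using jk by arith+
      have rec: "C \<theta> (Suc d) j k = s2 * (C \<theta> d (j-1) (k-1) + C \<theta> d (j-1) k + C \<theta> d j (k-1) + C \<theta> d j k) / 4"
        using C_rec[of j d k \<theta>] jk False jj unfolding Pj(1,3) by (simp add: Pj s2_def algebra_simps)
      have rid: "\<rho> ^ dst j k = s2 * (\<rho> ^ dst (j-1) (k-1) + \<rho> ^ dst (j-1) k + \<rho> ^ dst j (k-1) + \<rho> ^ dst j k) / 4"
        by (rule rho_id[OF fp False jk(1) jk(3)])
      have bnd: "\<bar>C \<theta> d j' k' - \<rho> ^ dst j' k'\<bar> \<le> 2 * s2 ^ (m - 1)" if "j' \<in> {j-1, j}" "k' \<in> {k-1, k}" for j' k'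
      proof -
        have le: "j' \<le> d" "k' \<le> d" using that jk by auto
        have "m - 1 \<le> mm d j' k'" using that jk unfolding m_def mm_def by (auto simp: min_def max_def split: if_splits)
        then have "s2 ^ mm d j' k' \<le> s2 ^ (m - 1)" using s0 s1 by (simp add: power_decreasing)
        then show ?thesis using Suc.IH[OF le] by simp
      qed
      have "C \<theta> (Suc d) j k - \<rho> ^ dst j k = s2 / 4 * ((C \<theta> d (j-1) (k-1) - \<rho> ^ dst (j-1) (k-1)) + (C \<theta> d (j-1) k - \<rho> ^ dst (j-1) k)
          + (C \<theta> d j (k-1) - \<rho> ^ dst j (k-1)) + (C \<theta> d j k - \<rho> ^ dst j k))"
      proof -
        have "C \<theta> (Suc d) j k - \<rho> ^ dst j k = s2 * (C \<theta> d (j-1) (k-1) + C \<theta> d (j-1) k + C \<theta> d j (k-1) + C \<theta> d j k) / 4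
           - s2 * (\<rho> ^ dst (j-1) (k-1) + \<rho> ^ dst (j-1) k + \<rho> ^ dst j (k-1) + \<rho> ^ dst j k) / 4"
          using rec rid by linarith
        also have "\<dots> = s2 / 4 * ((C \<theta> d (j-1) (k-1) - \<rho> ^ dst (j-1) (k-1)) + (C \<theta> d (j-1) k - \<rho> ^ dst (j-1) k)
          + (C \<theta> d j (k-1) - \<rho> ^ dst j (k-1)) + (C \<theta> d j k - \<rho> ^ dst j k))"
          by (simp add: field_simps)
        finally show ?thesis .
      qed
      also have "\<bar>\<dots>\<bar> \<le> s2 / 4 * (4 * (2 * s2 ^ (m - 1)))"
      proof -
        have "\<bar>(C \<theta> d (j-1) (k-1) - \<rho> ^ dst (j-1) (k-1)) + (C \<theta> d (j-1) k - \<rho> ^ dst (j-1) k)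
          + (C \<theta> d j (k-1) - \<rho> ^ dst j (k-1)) + (C \<theta> d j k - \<rho> ^ dst j k)\<bar> \<le> 4 * (2 * s2 ^ (m - 1))"
          using bnd[of "j-1" "k-1", OF insertI1 insertI1] bnd[of "j-1" k, OF insertI1 insertI2[OF singletonI]]
            bnd[of j "k-1", OF insertI2[OF singletonI] insertI1] bnd[of j k, OF insertI2[OF singletonI] insertI2[OF singletonI]]
          by (simp only: abs_le_iff) linarith
        then have "s2 / 4 * \<bar>(C \<theta> d (j-1) (k-1) - \<rho> ^ dst (j-1) (k-1)) + (C \<theta> d (j-1) k - \<rho> ^ dst (j-1) k)
          + (C \<theta> d j (k-1) - \<rho> ^ dst j (k-1)) + (C \<theta> d j k - \<rho> ^ dst j k)\<bar> \<le> s2 / 4 * (4 * (2 * s2 ^ (m - 1)))"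
          by (rule mult_left_mono) (use s0 in simp)
        then show ?thesis using s0 by (simp only: abs_mult abs_divide abs_of_nonneg)
      qed
      also have "\<dots> = 2 * s2 ^ m"
      proof -
        have "m = Suc (m - 1)" using mpos m_def by simp
        then have "s2 ^ m = s2 * s2 ^ (m - 1)" by (metis power_Suc)
        then show ?thesis by simp
      qed
      finally show ?thesis by (simp add: m_def)
    qed
  qed
qed

lemma C_one:
  assumes "(sin (2 * \<theta>))\<^sup>2 = 1"
  shows "j \<le> d \<Longrightarrow> k \<le> d \<Longrightarrow> C \<theta> d j k = 1"
proof (induction d arbitrary: j k)
  case 0 then show ?case using C_diag[of 0 0 \<theta>] by simp
next
  case (Suc d)
  show ?case
  proof (cases "j = k")
    case True then show ?thesis using C_diag Suc by simp
  next
    case False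
    have j: "j \<le> d + 1" and k: "k \<le> d + 1" using Suc by auto
    have "(\<Sum>j'\<in>P d j. \<Sum>k'\<in>P d k. C \<theta> d j' k') = (\<Sum>j'\<in>P d j. \<Sum>k'\<in>P d k. 1)"
      by (intro sum.cong refl Suc.IH) (use P_le j k in auto)
    then show ?thesis using C_rec[OF j k False, of \<theta>] assms card_P_pos[OF j] card_P_pos[OF k] by simp
  qed
qed

lemma cos_shift_int: "cos (y - 2 * pi * real_of_int k) = cos y"
  by (simp add: cos_diff)

lemma cos_le0_iff: "cos y \<le> 0 \<longleftrightarrow> (\<exists>k::int. pi/2 + 2*pi*k \<le> y \<and> y \<le> 3*pi/2 + 2*pi*k)"
proof
  assume c: "cos y \<le> 0"
  define k where "k = \<lceil>(y - 3*pi/2) / (2*pi)\<rceil>"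
  define y' where "y' = y - 2 * pi * real_of_int k"
  have "(y - 3*pi/2) / (2*pi) \<le> real_of_int k" "real_of_int k < (y - 3*pi/2) / (2*pi) + 1"
    unfolding k_def by linarith+
  then have b: "-(pi/2) < y'" "y' \<le> 3*pi/2" unfolding y'_def using pi_gt_zero
    by (simp_all add: field_simps)
  have cy: "cos y' \<le> 0" using c by (simp add: y'_def cos_shift_int)
  have "pi/2 \<le> y'"
  proof (rule ccontr)
    assume "\<not> pi/2 \<le> y'"
    then have "0 < cos y'" using b by (intro cos_gt_zero_pi) auto
    then show False using cy by simp
  qed
  then show "\<exists>k::int. pi/2 + 2*pi*k \<le> y \<and> y \<le> 3*pi/2 + 2*pi*k"
    using b by (intro exI[of _ k]) (simp add: y'_def)
next
  assume "\<exists>k::int. pi/2 + 2*pi*k \<le> y \<and> y \<le> 3*pi/2 + 2*pi*k"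
  then obtain k :: int where k: "pi/2 + 2*pi*k \<le> y" "y \<le> 3*pi/2 + 2*pi*k" by blast
  define y' where "y' = y - 2 * pi * real_of_int k"
  have "0 \<le> cos (y' - pi)" using k by (intro cos_ge_zero) (simp_all add: y'_def)
  then have "cos y' \<le> 0" by simp
  then show "cos y \<le> 0" by (simp add: y'_def cos_shift_int)
qed

lemma cos2_le0_iff: "cos (2 * \<theta>) \<le> 0 \<longleftrightarrow> (\<exists>k::int.
            (pi / 4 + 2 * pi * k \<le> \<theta> \<and> \<theta> \<le> 3 * pi / 4 + 2 * pi * k)
          \<or> (- 3 * pi / 4 + 2 * pi * k \<le> \<theta> \<and> \<theta> \<le> - pi / 4 + 2 * pi * k))"
proof
  assume "cos (2 * \<theta>) \<le> 0"
  then obtain k :: int where k: "pi/2 + 2*pi*k \<le> 2 * \<theta>" "2 * \<theta> \<le> 3*pi/2 + 2*pi*k"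
    using cos_le0_iff by blast
  show "\<exists>k::int. (pi / 4 + 2 * pi * k \<le> \<theta> \<and> \<theta> \<le> 3 * pi / 4 + 2 * pi * k)
          \<or> (- 3 * pi / 4 + 2 * pi * k \<le> \<theta> \<and> \<theta> \<le> - pi / 4 + 2 * pi * k)"
  proof (cases "even k")
    case True
    then obtain m where m: "k = 2 * m" by blast
    then have km: "real_of_int k = 2 * real_of_int m" by simp
    have e: "2 * pi * real_of_int k = 2 * pi * real_of_int m + 2 * pi * real_of_int m" unfolding km by (simp add: algebra_simps)
    show ?thesis using k e by (intro exI[of _ m] disjI1) linarith
  next
    case False
    then obtain m' where "k = 2 * m' + 1" by (auto elim: oddE)
    then obtain m where m: "k = 2 * m - 1" by (intro that[of "m' + 1"]) simp
    then have km: "real_of_int k = 2 * real_of_int m - 1" by simp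
    have e: "2 * pi * real_of_int k = 2 * pi * real_of_int m + 2 * pi * real_of_int m - 2 * pi" unfolding km by (simp add: algebra_simps)
    show ?thesis using k e by (intro exI[of _ m] disjI2) linarith
  qed
next
  assume "\<exists>k::int. (pi / 4 + 2 * pi * k \<le> \<theta> \<and> \<theta> \<le> 3 * pi / 4 + 2 * pi * k)
          \<or> (- 3 * pi / 4 + 2 * pi * k \<le> \<theta> \<and> \<theta> \<le> - pi / 4 + 2 * pi * k)"
  then obtain m :: int where
    "(pi / 4 + 2 * pi * m \<le> \<theta> \<and> \<theta> \<le> 3 * pi / 4 + 2 * pi * m)
          \<or> (- 3 * pi / 4 + 2 * pi * m \<le> \<theta> \<and> \<theta> \<le> - pi / 4 + 2 * pi * m)" by blast
  then show "cos (2 * \<theta>) \<le> 0"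
  proof
    assume h: "pi / 4 + 2 * pi * m \<le> \<theta> \<and> \<theta> \<le> 3 * pi / 4 + 2 * pi * m"
    have "real_of_int (2 * m) = 2 * real_of_int m" by simp
    then show ?thesis using h unfolding cos_le0_iff by (intro exI[of _ "2 * m"]) (auto simp: field_simps)
  next
    assume h: "- 3 * pi / 4 + 2 * pi * m \<le> \<theta> \<and> \<theta> \<le> - pi / 4 + 2 * pi * m"
    have "real_of_int (2 * m - 1) = 2 * real_of_int m - 1" by simp
    then show ?thesis using h unfolding cos_le0_iff by (intro exI[of _ "2 * m - 1"]) (auto simp: field_simps)
  qed
qed

lemma par_eq: "par v = (if fst v \<ge> 1 then {(fst v - 1, snd v)} else {}) \<union> (if snd v \<ge> 1 then {(fst v, snd v - 1)} else {})"
  by (cases v) (auto simp: par_def in_edges_def Let_def)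

lemma par_iff: "i \<in> par v \<longleftrightarrow> v = (fst i + 1, snd i) \<or> v = (fst i, snd i + 1)"
  by (cases i; cases v) (auto simp: par_eq)

lemma kap_prod:
  assumes "cc \<in> lattice L - R i" "\<forall>v\<in>lattice L - R i. v \<noteq> cc \<longrightarrow> i \<notin> par v" "i \<in> par cc" "indeg cc = 2"
  shows "(\<Prod>v\<in>lattice L - R i. kap \<theta> i v) = cos \<theta>"
proof -
  have "(\<Prod>v\<in>lattice L - R i. kap \<theta> i v) = kap \<theta> i cc * (\<Prod>v\<in>lattice L - R i - {cc}. kap \<theta> i v)"
    using assms(1) by (simp add: prod.remove)
  also have "(\<Prod>v\<in>lattice L - R i - {cc}. kap \<theta> i v) = 1"
    by (rule prod.neutral) (use assms(2) in \<open>auto simp: kap_def\<close>)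
  finally show ?thesis using assms(3,4) by (simp add: kap_def)
qed

lemma kap_right:
  assumes "2 \<le> L" "b \<le> L - 2"
  shows "(\<Prod>v\<in>lattice L - R (L-1, b). kap \<theta> (L-1, b) v) = cos \<theta>"
  by (rule kap_prod[where cc="(L-1, b+1)"]) (use assms in \<open>auto simp: lattice_def R_def par_iff indeg_def\<close>)

lemma kap_top:
  assumes "2 \<le> L" "a \<le> L - 2"
  shows "(\<Prod>v\<in>lattice L - R (a, L-1). kap \<theta> (a, L-1) v) = cos \<theta>"
  by (rule kap_prod[where cc="(a+1, L-1)"]) (use assms in \<open>auto simp: lattice_def R_def par_iff indeg_def\<close>)

lemma finite_R': "finite (R i - {i})" using finite_R by simp

lemma cos_two_zv: "cos (2 * (\<theta> / 2 * (zv b1 + zv b2))) = (1 + cos (2*\<theta>)) / 2 - (1 - cos (2*\<theta>)) / 2 * (zv b1 * zv b2)"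
  by (cases b1; cases b2) (simp_all add: zv_def field_simps)

lemma X_interior:
  assumes "1 \<le> a0" "1 \<le> b0"
  shows "(\<Sum>x\<in>cfg (R (a0,b0) - {(a0,b0)}). cos (2 * beta \<theta> (a0,b0) x) * (\<Prod>w\<in>R (a0,b0) - {(a0,b0)}. hw \<theta> w x))
       = (1 + cos (2*\<theta>)) / 2 - (1 - cos (2*\<theta>)) / 2 * C \<theta> (a0 + b0 - 1) (a0 - 1) a0"
proof -
  define V where "V = R (a0,b0) - {(a0,b0)}"
  define d where "d = a0 + b0 - 1"
  have p1: "pos d (a0 - 1) = (a0 - 1, b0)" and p2: "pos d a0 = (a0, b0 - 1)"
    using assms by (auto simp: pos_def d_def)
  have bt: "beta \<theta> (a0,b0) x = \<theta> / 2 * (zv (x (pos d (a0-1))) + zv (x (pos d a0)))" for x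
    using assms unfolding p1 p2 by (simp add: beta_def in_edges_def indeg_def Let_def)
  have inV: "pos d (a0-1) \<in> V" "pos d a0 \<in> V" unfolding p1 p2 V_def R_def using assms by auto
  have "(\<Sum>x\<in>cfg V. cos (2 * beta \<theta> (a0,b0) x) * (\<Prod>w\<in>V. hw \<theta> w x))
     = (\<Sum>x\<in>cfg V. (1 + cos (2*\<theta>)) / 2 * (\<Prod>w\<in>V. hw \<theta> w x) - (1 - cos (2*\<theta>)) / 2 *
          (zv (x (pos d (a0-1))) * zv (x (pos d a0)) * (\<Prod>w\<in>V. hw \<theta> w x)))"
    unfolding bt cos_two_zv by (simp add: algebra_simps)
  also have "\<dots> = (1 + cos (2*\<theta>)) / 2 * (\<Sum>x\<in>cfg V. (\<Prod>w\<in>V. hw \<theta> w x)) - (1 - cos (2*\<theta>)) / 2 *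
          (\<Sum>x\<in>cfg V. zv (x (pos d (a0-1))) * zv (x (pos d a0)) * (\<Prod>w\<in>V. hw \<theta> w x))"
    by (simp add: sum_subtractf sum_distrib_left)
  also have "(\<Sum>x\<in>cfg V. (\<Prod>w\<in>V. hw \<theta> w x)) = 1"
    unfolding V_def by (rule E_one[OF finite_R' anc_R'])
  also have "(\<Sum>x\<in>cfg V. zv (x (pos d (a0-1))) * zv (x (pos d a0)) * (\<Prod>w\<in>V. hw \<theta> w x)) = C \<theta> d (a0-1) a0"
    by (rule C_any) (use inV assms in \<open>auto simp: V_def d_def finite_R intro: anc_R'\<close>)
  finally show ?thesis by (simp add: V_def d_def)
qed

lemma X_edge1:
  assumes "1 \<le> a0"
  shows "(\<Sum>x\<in>cfg (R (a0,0) - {(a0,0)}). cos (2 * beta \<theta> (a0,0) x) * (\<Prod>w\<in>R (a0,0) - {(a0,0)}. hw \<theta> w x)) = cos (2*\<theta>)"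
proof -
  have "cos (2 * beta \<theta> (a0,0) x) = cos (2*\<theta>)" for x
    using assms by (cases "x (a0 - 1, 0)") (simp_all add: beta_def in_edges_def indeg_def zv_def)
  then show ?thesis using E_one[OF finite_R'[of "(a0,0)"] anc_R'[of "(a0,0)"], of \<theta>] by (simp add: sum_distrib_left[symmetric])
qed

lemma X_edge2:
  assumes "1 \<le> b0"
  shows "(\<Sum>x\<in>cfg (R (0,b0) - {(0,b0)}). cos (2 * beta \<theta> (0,b0) x) * (\<Prod>w\<in>R (0,b0) - {(0,b0)}. hw \<theta> w x)) = cos (2*\<theta>)"
proof -
  have "cos (2 * beta \<theta> (0,b0) x) = cos (2*\<theta>)" for x
    using assms by (cases "x (0, b0 - 1)") (simp_all add: beta_def in_edges_def indeg_def zv_def)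
  then show ?thesis using E_one[OF finite_R'[of "(0,b0)"] anc_R'[of "(0,b0)"], of \<theta>] by (simp add: sum_distrib_left[symmetric])
qed

definition rho :: "real \<Rightarrow> real" where "rho \<theta> = (1 - \<bar>cos (2*\<theta>)\<bar>) / (1 + \<bar>cos (2*\<theta>)\<bar>)"
definition EE :: "real \<Rightarrow> real" where "EE \<theta> = (if (sin (2*\<theta>))\<^sup>2 < 1 then (sin (2*\<theta>))\<^sup>2 else 0)"

lemma abs_cos_le: "\<bar>cos (x::real)\<bar> \<le> 1" using cos_le_one[of x] cos_ge_minus_one[of x] by (simp add: abs_le_iff)

lemma rho_props: "0 \<le> rho \<theta>" "rho \<theta> \<le> 1" "(sin (2*\<theta>))\<^sup>2 * (1 + rho \<theta>)\<^sup>2 = 4 * rho \<theta>"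
proof -
  define c where "c = \<bar>cos (2*\<theta>)\<bar>"
  have c0: "0 \<le> c" "c \<le> 1" using abs_cos_le[of "2*\<theta>"] by (auto simp: c_def)
  have s: "(sin (2*\<theta>))\<^sup>2 = 1 - c^2" by (simp add: c_def sin_squared_eq)
  have r: "rho \<theta> = (1 - c) / (1 + c)" unfolding rho_def c_def ..
  show "0 \<le> rho \<theta>" "rho \<theta> \<le> 1" unfolding r using c0 by (simp_all add: divide_le_eq)
  have "1 + rho \<theta> = 2 / (1 + c)" unfolding r using c0 by (simp add: field_simps)
  then have "(1 - c^2) * (1 + rho \<theta>)\<^sup>2 = (1 - c^2) * 4 / (1 + c)^2" by (simp add: power_divide)
  also have "\<dots> = 4 * ((1 - c) / (1 + c))"
  proof -
    have nz: "1 + c \<noteq> 0" using c0 by simp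
    have "(1 - c^2) * 4 / (1 + c)^2 = ((1 - c) * 4) * (1 + c) / ((1 + c) * (1 + c))"
      by (simp add: power2_eq_square algebra_simps)
    also have "\<dots> = (1 - c) * 4 / (1 + c)" using nz by simp
    finally show ?thesis by simp
  qed
  finally show "(sin (2*\<theta>))\<^sup>2 * (1 + rho \<theta>)\<^sup>2 = 4 * rho \<theta>"
    unfolding s r .
qed

lemma EE_props: "0 \<le> EE \<theta>" "EE \<theta> < 1" by (auto simp: EE_def)

lemma err_adj:
  assumes "j \<le> d" "k \<le> d" "dst j k = 1"
  shows "\<bar>C \<theta> d j k - rho \<theta>\<bar> \<le> 2 * EE \<theta> ^ mm d j k"
proof (cases "(sin (2*\<theta>))\<^sup>2 < 1")
  case True
  then show ?thesis using C_err[OF rho_props(1,2,3) assms(1,2)] assms(3) by (simp add: EE_def)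
next
  case False
  then have s1: "(sin (2*\<theta>))\<^sup>2 = 1" using abs_square_le_1[of "sin (2*\<theta>)"] abs_sin_le_one[of "2*\<theta>"] by linarith
  have "(1 + rho \<theta>)\<^sup>2 = 4 * rho \<theta>" using rho_props(3)[of \<theta>] s1 by simp
  then have "(rho \<theta> - 1)\<^sup>2 = 0" by (simp add: power2_eq_square algebra_simps)
  then have "rho \<theta> = 1" by simp
  moreover have "C \<theta> d j k = 1" using C_one[OF s1 assms(1,2)] .
  moreover have "0 \<le> EE \<theta> ^ mm d j k" using EE_props by simp
  ultimately show ?thesis by simp
qed

definition ll :: "real \<Rightarrow> real" where
  "ll \<theta> = cos \<theta> * ((1 + cos (2*\<theta>)) / 2 - (1 - cos (2*\<theta>)) / 2 * rho \<theta>)"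

definition fR :: "real \<Rightarrow> nat \<Rightarrow> nat \<Rightarrow> real" where
  "fR \<theta> L b = (if b = 0 then cos \<theta> * cos (2*\<theta>) else cos \<theta> * ((1 + cos (2*\<theta>)) / 2 - (1 - cos (2*\<theta>)) / 2 * C \<theta> (L - 2 + b) (L - 2) (L - 1)))"
definition fT :: "real \<Rightarrow> nat \<Rightarrow> nat \<Rightarrow> real" where
  "fT \<theta> L a = (if a = 0 then cos \<theta> * cos (2*\<theta>) else cos \<theta> * ((1 + cos (2*\<theta>)) / 2 - (1 - cos (2*\<theta>)) / 2 * C \<theta> (a + L - 2) (a - 1) a))"

lemma expect_R:
  assumes "2 \<le> L" "b \<le> L - 2"
  shows "expect L (whip_state L \<theta>) (pauliX (L-1, b)) = complex_of_real (fR \<theta> L b)"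
proof -
  have i: "(L-1, b) \<in> lattice L" using assms by (auto simp: lattice_def)
  have e1: "(\<Prod>v\<in>lattice L - R (L-1, b). kap \<theta> (L-1, b) v) = cos \<theta>" by (rule kap_right[OF assms])
  have e2: "(\<Sum>x\<in>cfg (R (L-1,b) - {(L-1,b)}). cos (2 * beta \<theta> (L-1,b) x) * (\<Prod>w\<in>R (L-1,b) - {(L-1,b)}. hw \<theta> w x))
     = (if b = 0 then cos (2*\<theta>) else (1 + cos (2*\<theta>)) / 2 - (1 - cos (2*\<theta>)) / 2 * C \<theta> (L - 2 + b) (L - 2) (L - 1))"
  proof (cases "b = 0")
    case True then show ?thesis using X_edge1[of "L-1" \<theta>] assms by simp
  next
    case False
    have e: "L - 1 + b - 1 = L - 2 + b" "L - 1 - 1 = L - 2" using assms False by auto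
    show ?thesis using X_interior[of "L-1" b \<theta>] assms False unfolding e by simp
  qed
  show ?thesis unfolding expectX[OF i] e1 e2 fR_def by simp
qed

lemma expect_T:
  assumes "2 \<le> L" "a \<le> L - 2"
  shows "expect L (whip_state L \<theta>) (pauliX (a, L-1)) = complex_of_real (fT \<theta> L a)"
proof -
  have i: "(a, L-1) \<in> lattice L" using assms by (auto simp: lattice_def)
  have e1: "(\<Prod>v\<in>lattice L - R (a, L-1). kap \<theta> (a, L-1) v) = cos \<theta>" by (rule kap_top[OF assms])
  have e2: "(\<Sum>x\<in>cfg (R (a, L-1) - {(a, L-1)}). cos (2 * beta \<theta> (a, L-1) x) * (\<Prod>w\<in>R (a, L-1) - {(a, L-1)}. hw \<theta> w x))
     = (if a = 0 then cos (2*\<theta>) else (1 + cos (2*\<theta>)) / 2 - (1 - cos (2*\<theta>)) / 2 * C \<theta> (a + L - 2) (a - 1) a)"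
  proof (cases "a = 0")
    case True then show ?thesis using X_edge2[of "L-1" \<theta>] assms by simp
  next
    case False
    have e: "a + (L - 1) - 1 = a + L - 2" using assms False by auto
    show ?thesis using X_interior[of a "L-1" \<theta>] assms False unfolding e by simp
  qed
  show ?thesis unfolding expectX[OF i] e1 e2 fT_def by simp
qed

lemma boundaryX_eq:
  assumes "2 \<le> L"
  shows "boundaryX L \<theta> = complex_of_real ((\<Sum>b\<le>L-2. fR \<theta> L b) + (\<Sum>a\<le>L-2. fT \<theta> L a))"
proof -
  have B: "boundary' L = (\<lambda>b. (L-1, b)) ` {..L-2} \<union> (\<lambda>a. (a, L-1)) ` {..L-2}"
    by (auto simp: boundary'_def)
  have D: "(\<lambda>b. (L-1, b)) ` {..L-2} \<inter> (\<lambda>a. (a, L-1)) ` {..L-2} = {}" using assms by auto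
  have "boundaryX L \<theta> = (\<Sum>i\<in>(\<lambda>b. (L-1, b)) ` {..L-2}. expect L (whip_state L \<theta>) (pauliX i))
      + (\<Sum>i\<in>(\<lambda>a. (a, L-1)) ` {..L-2}. expect L (whip_state L \<theta>) (pauliX i))"
    unfolding boundaryX_def B by (rule sum.union_disjoint) (use D in auto)
  also have "\<dots> = (\<Sum>b\<le>L-2. expect L (whip_state L \<theta>) (pauliX (L-1, b))) + (\<Sum>a\<le>L-2. expect L (whip_state L \<theta>) (pauliX (a, L-1)))"
    by (simp add: sum.reindex inj_on_def)
  also have "\<dots> = (\<Sum>b\<le>L-2. complex_of_real (fR \<theta> L b)) + (\<Sum>a\<le>L-2. complex_of_real (fT \<theta> L a))"
    using expect_R[OF assms] expect_T[OF assms] by simp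
  finally show ?thesis by simp
qed

lemma mm_R: "1 \<le> b \<Longrightarrow> b \<le> L - 2 \<Longrightarrow> 2 \<le> L \<Longrightarrow> mm (L - 2 + b) (L - 2) (L - 1) = b - 1"
  by (simp add: mm_def)
lemma mm_T: "1 \<le> a \<Longrightarrow> a \<le> L - 2 \<Longrightarrow> 2 \<le> L \<Longrightarrow> mm (a + L - 2) (a - 1) a = a - 1"
  by (simp add: mm_def)

lemma one_minus_cos_nonneg: "0 \<le> 1 - cos (x::real)" using cos_le_one[of x] by simp

lemma fR_err:
  assumes "2 \<le> L" "1 \<le> b" "b \<le> L - 2"
  shows "\<bar>fR \<theta> L b - ll \<theta>\<bar> \<le> \<bar>cos \<theta>\<bar> * (1 - cos (2*\<theta>)) * EE \<theta> ^ (b - 1)"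
proof -
  have e: "\<bar>C \<theta> (L - 2 + b) (L - 2) (L - 1) - rho \<theta>\<bar> \<le> 2 * EE \<theta> ^ (b - 1)"
    using err_adj[of "L-2" "L-2+b" "L-1" \<theta>] assms mm_R[OF assms(2,3,1)] by (simp add: dst_def)
  have "fR \<theta> L b - ll \<theta> = - (cos \<theta> * ((1 - cos (2*\<theta>)) / 2)) * (C \<theta> (L - 2 + b) (L - 2) (L - 1) - rho \<theta>)"
    using assms by (simp add: fR_def ll_def algebra_simps)
  then have "\<bar>fR \<theta> L b - ll \<theta>\<bar> = \<bar>cos \<theta>\<bar> * ((1 - cos (2*\<theta>)) / 2) * \<bar>C \<theta> (L - 2 + b) (L - 2) (L - 1) - rho \<theta>\<bar>"
    using one_minus_cos_nonneg[of "2*\<theta>"] by (simp add: abs_mult)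
  also have "\<dots> \<le> \<bar>cos \<theta>\<bar> * ((1 - cos (2*\<theta>)) / 2) * (2 * EE \<theta> ^ (b - 1))"
    by (rule mult_left_mono[OF e]) (use one_minus_cos_nonneg[of "2*\<theta>"] in simp)
  finally show ?thesis by simp
qed

lemma fT_err:
  assumes "2 \<le> L" "1 \<le> a" "a \<le> L - 2"
  shows "\<bar>fT \<theta> L a - ll \<theta>\<bar> \<le> \<bar>cos \<theta>\<bar> * (1 - cos (2*\<theta>)) * EE \<theta> ^ (a - 1)"
proof -
  have e: "\<bar>C \<theta> (a + L - 2) (a - 1) a - rho \<theta>\<bar> \<le> 2 * EE \<theta> ^ (a - 1)"
    using err_adj[of "a-1" "a + L - 2" a \<theta>] assms mm_T[OF assms(2,3,1)] by (simp add: dst_def)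
  have "fT \<theta> L a - ll \<theta> = - (cos \<theta> * ((1 - cos (2*\<theta>)) / 2)) * (C \<theta> (a + L - 2) (a - 1) a - rho \<theta>)"
    using assms by (simp add: fT_def ll_def algebra_simps)
  then have "\<bar>fT \<theta> L a - ll \<theta>\<bar> = \<bar>cos \<theta>\<bar> * ((1 - cos (2*\<theta>)) / 2) * \<bar>C \<theta> (a + L - 2) (a - 1) a - rho \<theta>\<bar>"
    using one_minus_cos_nonneg[of "2*\<theta>"] by (simp add: abs_mult)
  also have "\<dots> \<le> \<bar>cos \<theta>\<bar> * ((1 - cos (2*\<theta>)) / 2) * (2 * EE \<theta> ^ (a - 1))"
    by (rule mult_left_mono[OF e]) (use one_minus_cos_nonneg[of "2*\<theta>"] in simp)
  finally show ?thesis by simp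
qed

lemma geo_eq: "(E::real) \<noteq> 1 \<Longrightarrow> (\<Sum>b\<in>{1..n}. E ^ (b - 1)) = (1 - E ^ n) / (1 - E)"
proof (induction n)
  case 0 then show ?case by simp
next
  case (Suc n)
  have nz: "1 - E \<noteq> 0" using Suc.prems by simp
  have "(\<Sum>b\<in>{1..Suc n}. E ^ (b - 1)) = (\<Sum>b\<in>{1..n}. E ^ (b - 1)) + E ^ n" by simp
  also have "\<dots> = (1 - E ^ n) / (1 - E) + E ^ n" using Suc by simp
  also have "\<dots> = (1 - E ^ Suc n) / (1 - E)" using nz by (simp add: field_simps)
  finally show ?case .
qed

lemma geo_bound: "0 \<le> (E::real) \<Longrightarrow> E < 1 \<Longrightarrow> (\<Sum>b\<in>{1..n}. E ^ (b - 1)) \<le> 1 / (1 - E)"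
  using geo_eq[of E n] by (simp add: divide_right_mono)

lemma sum_err:
  fixes f :: "nat \<Rightarrow> real"
  assumes "\<And>b. 1 \<le> b \<Longrightarrow> b \<le> n \<Longrightarrow> \<bar>f b - l\<bar> \<le> A * E ^ (b - 1)" "0 \<le> E" "E < 1" "0 \<le> A"
  shows "\<bar>(\<Sum>b\<le>n. f b) - real (n + 1) * l\<bar> \<le> \<bar>f 0 - l\<bar> + A / (1 - E)"
proof -
  have split: "{..n} = insert 0 {1..n}" by auto
  have "(\<Sum>b\<le>n. f b) - real (n + 1) * l = (f 0 - l) + (\<Sum>b\<in>{1..n}. f b - l)"
    unfolding split by (simp add: sum_subtractf algebra_simps)
  also have "\<bar>\<dots>\<bar> \<le> \<bar>f 0 - l\<bar> + (\<Sum>b\<in>{1..n}. \<bar>f b - l\<bar>)"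
    using abs_triangle_ineq sum_abs order_trans add_left_mono by blast
  also have "(\<Sum>b\<in>{1..n}. \<bar>f b - l\<bar>) \<le> (\<Sum>b\<in>{1..n}. A * E ^ (b - 1))"
    by (rule sum_mono) (use assms(1) in auto)
  also have "\<dots> = A * (\<Sum>b\<in>{1..n}. E ^ (b - 1))" by (simp add: sum_distrib_left)
  also have "\<dots> \<le> A * (1 / (1 - E))" by (rule mult_left_mono[OF geo_bound]) (use assms in auto)
  finally show ?thesis by simp
qed

lemma S_bound:
  assumes "2 \<le> L"
  shows "\<bar>((\<Sum>b\<le>L-2. fR \<theta> L b) + (\<Sum>a\<le>L-2. fT \<theta> L a)) - real (2 * L - 2) * ll \<theta>\<bar> \<le>
    2 * (\<bar>cos \<theta> * cos (2*\<theta>) - ll \<theta>\<bar> + \<bar>cos \<theta>\<bar> * (1 - cos (2*\<theta>)) / (1 - EE \<theta>))"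
proof -
  define A where "A = \<bar>cos \<theta>\<bar> * (1 - cos (2*\<theta>))"
  have A0: "0 \<le> A" unfolding A_def using one_minus_cos_nonneg by simp
  have r: "\<bar>(\<Sum>b\<le>L-2. fR \<theta> L b) - real (L - 2 + 1) * ll \<theta>\<bar> \<le> \<bar>fR \<theta> L 0 - ll \<theta>\<bar> + A / (1 - EE \<theta>)"
    by (rule sum_err) (use fR_err[OF assms] EE_props A0 in \<open>auto simp: A_def\<close>)
  have t: "\<bar>(\<Sum>a\<le>L-2. fT \<theta> L a) - real (L - 2 + 1) * ll \<theta>\<bar> \<le> \<bar>fT \<theta> L 0 - ll \<theta>\<bar> + A / (1 - EE \<theta>)"
    by (rule sum_err) (use fT_err[OF assms] EE_props A0 in \<open>auto simp: A_def\<close>)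
  have e: "real (2 * L - 2) = 2 * real (L - 2 + 1)" using assms by simp
  have "\<bar>((\<Sum>b\<le>L-2. fR \<theta> L b) + (\<Sum>a\<le>L-2. fT \<theta> L a)) - real (2 * L - 2) * ll \<theta>\<bar>
     \<le> \<bar>(\<Sum>b\<le>L-2. fR \<theta> L b) - real (L - 2 + 1) * ll \<theta>\<bar> + \<bar>(\<Sum>a\<le>L-2. fT \<theta> L a) - real (L - 2 + 1) * ll \<theta>\<bar>"
  proof -
    have eq: "((\<Sum>b\<le>L-2. fR \<theta> L b) + (\<Sum>a\<le>L-2. fT \<theta> L a)) - real (2 * L - 2) * ll \<theta>
       = ((\<Sum>b\<le>L-2. fR \<theta> L b) - real (L - 2 + 1) * ll \<theta>) + ((\<Sum>a\<le>L-2. fT \<theta> L a) - real (L - 2 + 1) * ll \<theta>)"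
      unfolding e by (simp add: algebra_simps)
    show ?thesis unfolding eq by (rule abs_triangle_ineq)
  qed
  also have "\<dots> \<le> 2 * (\<bar>cos \<theta> * cos (2*\<theta>) - ll \<theta>\<bar> + A / (1 - EE \<theta>))"
    using r t by (simp add: fR_def fT_def)
  finally show ?thesis by (simp add: A_def)
qed

lemma ll_val: "cos \<theta> \<noteq> 0 \<Longrightarrow> ll \<theta> = (cos (2 * \<theta>) + \<bar>cos (2 * \<theta>)\<bar>) / (2 * cos \<theta>)"
proof -
  assume c0: "cos \<theta> \<noteq> 0"
  define c where "c = cos (2*\<theta>)"
  have cc: "c = 2 * (cos \<theta>)\<^sup>2 - 1" unfolding c_def by (rule cos_double_cos)
  have cl: "-1 \<le> c" "c \<le> 1" unfolding c_def using cos_le_one[of "2*\<theta>"] abs_cos_le_one[of "2*\<theta>"] by auto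
  show ?thesis
  proof (cases "0 \<le> c")
    case True
    have pc: "1 + c = 2 * (cos \<theta> * cos \<theta>)" using cc by (simp add: power2_eq_square)
    have pos: "1 + c > 0" using True by simp
    have r: "rho \<theta> = (1 - c) / (1 + c)" using True by (simp add: rho_def c_def)
    have "(1 + c) / 2 - (1 - c) / 2 * ((1 - c) / (1 + c)) = 2 * c / (1 + c)"
      using pos by (simp add: field_simps power2_eq_square)
    then have "ll \<theta> = cos \<theta> * (2 * c / (1 + c))" unfolding ll_def r c_def[symmetric] by simp
    also have "\<dots> = c / cos \<theta>" unfolding pc using c0 by (simp add: field_simps)
    also have "\<dots> = (c + \<bar>c\<bar>) / (2 * cos \<theta>)" using True c0 by (simp add: field_simps)
    finally show ?thesis by (simp add: c_def)
  next
    case False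
    then have pos: "1 - c > 0" by simp
    have r: "rho \<theta> = (1 + c) / (1 - c)" using False by (simp add: rho_def c_def)
    have "(1 + c) / 2 - (1 - c) / 2 * ((1 + c) / (1 - c)) = 0"
      using pos by (simp add: field_simps)
    then have "ll \<theta> = 0" unfolding ll_def r c_def[symmetric] by simp
    then show ?thesis using False by (simp add: c_def)
  qed
qed

lemma ll_zero_iff: "ll \<theta> = 0 \<longleftrightarrow> cos (2 * \<theta>) \<le> 0"
proof (cases "cos \<theta> = 0")
  case True
  then have "cos (2*\<theta>) = -1" by (simp add: cos_double_cos)
  then show ?thesis using True by (simp add: ll_def)
next
  case False
  then show ?thesis using ll_val[OF False] by (auto simp: abs_if)
qed

lemma lim_main: "(\<lambda>L. boundaryX L \<theta> / of_nat (2 * L - 2)) \<longlonglongrightarrow> complex_of_real (ll \<theta>)"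
proof -
  define S where "S L = (\<Sum>b\<le>L-2. fR \<theta> L b) + (\<Sum>a\<le>L-2. fT \<theta> L a)" for L
  define K where "K = 2 * (\<bar>cos \<theta> * cos (2*\<theta>) - ll \<theta>\<bar> + \<bar>cos \<theta>\<bar> * (1 - cos (2*\<theta>)) / (1 - EE \<theta>))"
  have K0: "0 \<le> K" unfolding K_def using EE_props[of \<theta>] one_minus_cos_nonneg[of "2*\<theta>"] by simp
  have "(\<lambda>L. S L / real (2 * L - 2) - ll \<theta>) \<longlonglongrightarrow> 0"
  proof (rule tendsto_0_le[OF lim_1_over_n])
    show "\<forall>\<^sub>F L in sequentially. norm (S L / real (2 * L - 2) - ll \<theta>) \<le> norm (1 / real L) * K"
      using eventually_ge_at_top[of 2]
    proof eventually_elim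
      case (elim L)
      have pos: "real (2 * L - 2) > 0" using elim by simp
      have "S L / real (2 * L - 2) - ll \<theta> = (S L - real (2 * L - 2) * ll \<theta>) / real (2 * L - 2)"
        using pos by (simp add: field_simps)
      then have "norm (S L / real (2 * L - 2) - ll \<theta>) = \<bar>S L - real (2 * L - 2) * ll \<theta>\<bar> / real (2 * L - 2)"
        by simp
      also have "\<dots> \<le> K / real (2 * L - 2)"
        by (rule divide_right_mono) (use S_bound[OF elim, of \<theta>] in \<open>simp_all add: S_def K_def\<close>)
      also have "\<dots> \<le> K / real L"
        by (rule divide_left_mono) (use K0 elim in auto)
      finally show ?case by simp
    qed
  qed
  then have "(\<lambda>L. S L / real (2 * L - 2)) \<longlonglongrightarrow> ll \<theta>" by (simp add: LIM_zero_iff)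
  then have "(\<lambda>L. complex_of_real (S L / real (2 * L - 2))) \<longlonglongrightarrow> complex_of_real (ll \<theta>)"
    by (rule tendsto_of_real)
  then show ?thesis
  proof (rule Lim_transform_eventually)
    show "\<forall>\<^sub>F L in sequentially. complex_of_real (S L / real (2 * L - 2)) = boundaryX L \<theta> / of_nat (2 * L - 2)"
      using eventually_ge_at_top[of 2]
      by eventually_elim (simp add: boundaryX_eq S_def)
  qed
qed

theorem mainTheorem10:
  fixes \<theta> :: real
  shows "\<exists>l::real.
     ((\<lambda>L. boundaryX L \<theta> / of_nat (2 * L - 2)) \<longlonglongrightarrow> complex_of_real l)
     \<and> (cos \<theta> \<noteq> 0 \<longrightarrow> l = (cos (2 * \<theta>) + \<bar>cos (2 * \<theta>)\<bar>) / (2 * cos \<theta>))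
     \<and> (cos \<theta> = 0 \<longrightarrow> l = 0)
     \<and> (l = 0 \<longleftrightarrow> (\<exists>k::int.
            (pi / 4 + 2 * pi * k \<le> \<theta> \<and> \<theta> \<le> 3 * pi / 4 + 2 * pi * k)
          \<or> (- 3 * pi / 4 + 2 * pi * k \<le> \<theta> \<and> \<theta> \<le> - pi / 4 + 2 * pi * k)))"
proof (intro exI[of _ "ll \<theta>"] conjI impI)
  show "(\<lambda>L. boundaryX L \<theta> / of_nat (2 * L - 2)) \<longlonglongrightarrow> complex_of_real (ll \<theta>)" by (rule lim_main)
  show "cos \<theta> \<noteq> 0 \<Longrightarrow> ll \<theta> = (cos (2 * \<theta>) + \<bar>cos (2 * \<theta>)\<bar>) / (2 * cos \<theta>)" by (rule ll_val)
  show "cos \<theta> = 0 \<Longrightarrow> ll \<theta> = 0" by (simp add: ll_def)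
  show "ll \<theta> = 0 \<longleftrightarrow> (\<exists>k::int.
            (pi / 4 + 2 * pi * k \<le> \<theta> \<and> \<theta> \<le> 3 * pi / 4 + 2 * pi * k)
          \<or> (- 3 * pi / 4 + 2 * pi * k \<le> \<theta> \<and> \<theta> \<le> - pi / 4 + 2 * pi * k))"
    unfolding ll_zero_iff by (rule cos2_le0_iff)
qed

end
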